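(* Let $(X,\kappa)$ be a finite digital image and $f:X\to X$ a continuous self-map with $L(f)\neq 0$. Then either $f$ has a fixed point, or $f$ has at least two approximate fixed points.
   Context: A digital image is a pair $(X,\kappa)$ where $X$ is a set and $\kappa$ is a symmetric irreflexive relation on $X$ (the adjacency). Write $x\leftrightarrow y$ if adjacent, $x\Leftrightarrow y$ if adjacent or equal. A map $f$ is continuous if $x\leftrightarrow y$ implies $f(x)\Leftrightarrow f(y)$. A point $x$ is an approximate fixed point of $f:X\to X$ if $f(x)\Leftrightarrow x$. Simplicial homology: a $q$-simplex of $X$ is a set of $q+1$ pairwise adjacent points. $C_q(X)$ is the free abelian group generated by ordered $q$-simplices $\langle x_0,\dots,x_q\rangle$ modulo $\langle x_{\rho(0)},\dots,x_{\rho(q)}\rangle=\operatorname{sgn}(\rho)\langle x_0,\dots,x_q\rangle$, with boundary $\partial\langle x_0,\dots,x_q\rangle=\sum_{i=0}^q(-1)^i\langle x_0,\dots,\widehat{x_i},\dots,x_q\rangle$; $H_q(X)$ is its homology. For continuous $f$, $f_q\langle p_0,\dots,p_q\rangle=\langle f(p_0),\dots,f(p_q)\rangle$ (interpreted as $0$ if the image has fewer than $q+1$ points); this is a chain map inducing $f_{*,q}$ on $H_q$. The simplicial Lefschetz number of a self-map $f$ of a finite image is $L(f)=\sum_{q\ge0}(-1)^q\operatorname{tr}(f_{*,q})$, traces taken on $H_q(X)\otimes\mathbb Q$. *)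

theory Defs
  imports Complex_Main
begin

text \<open>A linear order on the carrier type is used only to fix the orientation of
  simplices (a basis of the oriented chain groups); the Lefschetz number does
  not depend on this choice.\<close>

definition adj_eq :: "('a \<Rightarrow> 'a \<Rightarrow> bool) \<Rightarrow> 'a \<Rightarrow> 'a \<Rightarrow> bool" where
  "adj_eq adj x y \<longleftrightarrow> x = y \<or> adj x y"

definition digital_image :: "'a set \<Rightarrow> ('a \<Rightarrow> 'a \<Rightarrow> bool) \<Rightarrow> bool" where
  "digital_image X adj \<longleftrightarrow> (\<forall>x y. adj x y \<longrightarrow> adj y x) \<and> (\<forall>x. \<not> adj x x)"

definition digitally_continuous ::
  "'a set \<Rightarrow> ('a \<Rightarrow> 'a \<Rightarrow> bool) \<Rightarrow> ('a \<Rightarrow> 'a) \<Rightarrow> bool" where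
  "digitally_continuous X adj f \<longleftrightarrow>
     f ` X \<subseteq> X \<and> (\<forall>x\<in>X. \<forall>y\<in>X. adj x y \<longrightarrow> adj_eq adj (f x) (f y))"

definition approx_fixed_point :: "('a \<Rightarrow> 'a \<Rightarrow> bool) \<Rightarrow> ('a \<Rightarrow> 'a) \<Rightarrow> 'a \<Rightarrow> bool" where
  "approx_fixed_point adj f x \<longleftrightarrow> adj_eq adj (f x) x"

definition simplices :: "'a set \<Rightarrow> ('a \<Rightarrow> 'a \<Rightarrow> bool) \<Rightarrow> nat \<Rightarrow> 'a set set" where
  "simplices X adj q = {s. s \<subseteq> X \<and> finite s \<and> card s = Suc q \<and>
                          (\<forall>x\<in>s. \<forall>y\<in>s. x \<noteq> y \<longrightarrow> adj x y)}"

text \<open>Rational chains C_q(X) tensor Q, in the basis of simplices oriented by the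
  increasing order of their vertices: a chain is a coefficient function on
  sets supported on q-simplices.\<close>
definition chains :: "'a set \<Rightarrow> ('a \<Rightarrow> 'a \<Rightarrow> bool) \<Rightarrow> nat \<Rightarrow> ('a set \<Rightarrow> rat) set" where
  "chains X adj q = {c. \<forall>s. c s \<noteq> 0 \<longrightarrow> s \<in> simplices X adj q}"

text \<open>Number of inversions of a list; an ordered simplex l equals
  (-1)^inversions l times the basis element of set l.\<close>
definition inversions :: "'a::linorder list \<Rightarrow> nat" where
  "inversions l = card {(i, j). i < j \<and> j < length l \<and> l ! j < l ! i}"

definition bdry :: "'a::linorder set \<Rightarrow> ('a \<Rightarrow> 'a \<Rightarrow> bool) \<Rightarrow> nat \<Rightarrow> ('a set \<Rightarrow> rat) \<Rightarrow> ('a set \<Rightarrow> rat)" where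
  "bdry X adj q c = (\<lambda>t. if q = 0 then 0 else
      (\<Sum>s\<in>simplices X adj q. \<Sum>i<Suc q.
          if s - {sorted_list_of_set s ! i} = t then (-1) ^ i * c s else 0))"

text \<open>Induced chain map f_q: the basis simplex s goes to the ordered simplex
  <f x_0,...,f x_q>, i.e. (-1)^inversions times the basis element of f ` s,
  or 0 if the image has fewer than q+1 points.\<close>
definition chain_map :: "'a::linorder set \<Rightarrow> ('a \<Rightarrow> 'a \<Rightarrow> bool) \<Rightarrow> ('a \<Rightarrow> 'a) \<Rightarrow> nat \<Rightarrow>
     ('a set \<Rightarrow> rat) \<Rightarrow> ('a set \<Rightarrow> rat)" where
  "chain_map X adj f q c = (\<lambda>t.
      \<Sum>s\<in>simplices X adj q.
          if f ` s = t \<and> card (f ` s) = Suc q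
          then (-1) ^ inversions (map f (sorted_list_of_set s)) * c s else 0)"

definition cycles :: "'a::linorder set \<Rightarrow> ('a \<Rightarrow> 'a \<Rightarrow> bool) \<Rightarrow> nat \<Rightarrow> ('a set \<Rightarrow> rat) set" where
  "cycles X adj q = {c \<in> chains X adj q. bdry X adj q c = (\<lambda>_. 0)}"

definition boundaries :: "'a::linorder set \<Rightarrow> ('a \<Rightarrow> 'a \<Rightarrow> bool) \<Rightarrow> nat \<Rightarrow> ('a set \<Rightarrow> rat) set" where
  "boundaries X adj q = bdry X adj (Suc q) ` chains X adj (Suc q)"

text \<open>Trace of the map induced by g on the quotient Z/B (a Q-vector space of
  functions 'b => rat): choose z_0,...,z_{k-1} in Z whose classes form a basis of
  Z/B, write g z_i = sum_j a_ij z_j mod B, and take sum_i a_ii.\<close>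
definition quot_trace :: "('b \<Rightarrow> rat) set \<Rightarrow> ('b \<Rightarrow> rat) set \<Rightarrow> (('b \<Rightarrow> rat) \<Rightarrow> ('b \<Rightarrow> rat)) \<Rightarrow> rat" where
  "quot_trace Z B g = (SOME t. \<exists>k (z :: nat \<Rightarrow> 'b \<Rightarrow> rat) (a :: nat \<Rightarrow> nat \<Rightarrow> rat).
      (\<forall>i<k. z i \<in> Z) \<and>
      (\<forall>c. (\<lambda>x. \<Sum>i<k. c i * z i x) \<in> B \<longrightarrow> (\<forall>i<k. c i = 0)) \<and>
      (\<forall>w\<in>Z. \<exists>c. (\<lambda>x. w x - (\<Sum>i<k. c i * z i x)) \<in> B) \<and>
      (\<forall>i<k. (\<lambda>x. g (z i) x - (\<Sum>j<k. a i j * z j x)) \<in> B) \<and>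
      t = (\<Sum>i<k. a i i))"

text \<open>Simplicial Lefschetz number; H_q vanishes for q \<ge> card X.\<close>
definition lefschetz :: "'a::linorder set \<Rightarrow> ('a \<Rightarrow> 'a \<Rightarrow> bool) \<Rightarrow> ('a \<Rightarrow> 'a) \<Rightarrow> rat" where
  "lefschetz X adj f = (\<Sum>q\<le>card X. (-1) ^ q *
      quot_trace (cycles X adj q) (boundaries X adj q) (chain_map X adj f q))"

end

theory Submission
  imports Defs
begin


definition dell :: "nat \<Rightarrow> 'a list \<Rightarrow> 'a list" where
  "dell i l = take i l @ drop (Suc i) l"

definition swp :: "nat \<Rightarrow> 'a list \<Rightarrow> 'a list" where
  "swp j l = l[j := l ! Suc j, Suc j := l ! j]"

definition echain :: "'a::linorder list \<Rightarrow> 'a set \<Rightarrow> rat" where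
  "echain l = (\<lambda>t. if distinct l \<and> set l = t then (-1) ^ inversions l else 0)"

definition dL :: "'a::linorder list \<Rightarrow> 'a set \<Rightarrow> rat" where
  "dL l = (\<lambda>t. \<Sum>i<length l. (-1) ^ i * echain (dell i l) t)"

lemma length_dell[simp]: "i < length l \<Longrightarrow> length (dell i l) = length l - 1"
  by (simp add: dell_def)

lemma nth_dell: "i < length l \<Longrightarrow> m < length l - 1 \<Longrightarrow>
   dell i l ! m = (if m < i then l ! m else l ! Suc m)"
  by (auto simp: dell_def nth_append min_def)

lemma length_swp[simp]: "length (swp j l) = length l"
  by (simp add: swp_def)

lemma nth_swp: "Suc j < length l \<Longrightarrow> m < length l \<Longrightarrow>
   swp j l ! m = (if m = j then l ! Suc j else if m = Suc j then l ! j else l ! m)"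
  by (auto simp: swp_def nth_list_update)

lemma set_swp: "Suc j < length l \<Longrightarrow> set (swp j l) = set l"
  unfolding swp_def by (simp add: set_swap)

lemma distinct_swp: "Suc j < length l \<Longrightarrow> distinct (swp j l) = distinct l"
  unfolding swp_def by (simp add: distinct_swap)

lemma swp_swp: "Suc j < length l \<Longrightarrow> swp j (swp j l) = l"
  by (rule nth_equalityI) (auto simp: nth_swp)

lemma finite_inv: "finite {(i, j). i < j \<and> j < length l \<and> (l ! j < l ! i)}"
  by (rule finite_subset[of _ "{..<length l} \<times> {..<length l}"]) auto


lemma inversions_swp:
  assumes j: "Suc j < length l" and d: "l ! Suc j < l ! j"
  shows "inversions l = Suc (inversions (swp j l))"
proof -
  define \<sigma> where "\<sigma> i = (if i = j then Suc j else if i = Suc j then j else i)" for i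
  define h where "h = (\<lambda>(i::nat, k::nat). (\<sigma> i, \<sigma> k))"
  let ?I = "\<lambda>l::'a list. {(i, k). i < k \<and> k < length l \<and> l ! k < l ! i}"
  have sl: "\<And>m. m < length l \<Longrightarrow> swp j l ! m = l ! \<sigma> m"
    using j by (auto simp: nth_swp \<sigma>_def)
  have \<sigma>lt: "\<And>m. m < length l \<Longrightarrow> \<sigma> m < length l" using j by (auto simp: \<sigma>_def)
  have \<sigma>\<sigma>: "\<And>m. \<sigma> (\<sigma> m) = m" by (auto simp: \<sigma>_def)
  have ord: "\<And>i k. i < k \<Longrightarrow> (i, k) \<noteq> (j, Suc j) \<Longrightarrow> \<sigma> i < \<sigma> k"
    by (auto simp: \<sigma>_def)
  have inj: "inj_on h (?I (swp j l))"
  proof -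
    have "inj \<sigma>" by (metis \<sigma>\<sigma> injI)
    then show ?thesis unfolding inj_on_def h_def by (auto simp: inj_eq)
  qed
  have notin: "(j, Suc j) \<notin> ?I (swp j l)"
    using j d by (auto simp: nth_swp)
  have eq: "?I l = insert (j, Suc j) (h ` ?I (swp j l))"
  proof (rule set_eqI, rule iffI)
    fix p assume p: "p \<in> ?I l"
    obtain i k where pik: "p = (i, k)" by (cases p)
    show "p \<in> insert (j, Suc j) (h ` ?I (swp j l))"
    proof (cases "p = (j, Suc j)")
      case False
      have ik: "i < k" "k < length l" "l ! k < l ! i" using p pik by auto
      have a1: "\<sigma> i < \<sigma> k" using ik ord[of i k] False pik by auto
      have a2: "\<sigma> k < length l" using \<sigma>lt ik by auto
      have a3: "\<sigma> i < length l" using a1 a2 by auto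
      have "swp j l ! \<sigma> k < swp j l ! \<sigma> i"
        using sl[OF a2] sl[OF a3] \<sigma>\<sigma> ik by simp
      then have mem: "(\<sigma> i, \<sigma> k) \<in> ?I (swp j l)"
        using a1 a2 by simp
      have heq: "h (\<sigma> i, \<sigma> k) = p" using pik by (simp add: h_def \<sigma>\<sigma>)
      have "p \<in> h ` ?I (swp j l)" using image_eqI[where f=h and x="(\<sigma> i, \<sigma> k)" and A="?I (swp j l)", OF heq[symmetric] mem] .
      then show ?thesis by (rule insertI2)
    qed simp
  next
    fix p assume p: "p \<in> insert (j, Suc j) (h ` ?I (swp j l))"
    show "p \<in> ?I l"
    proof (cases "p = (j, Suc j)")
      case True then show ?thesis using j d by simp
    next
      case False
      then have "p \<in> h ` ?I (swp j l)" using p by blast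
      then obtain i k where ik: "(i, k) \<in> ?I (swp j l)" and pe: "p = h (i, k)"
        by blast
      have pe': "p = (\<sigma> i, \<sigma> k)" using pe by (simp add: h_def)
      have ik1: "i < k" "k < length l" "swp j l ! k < swp j l ! i" using ik by auto
      have ik2: "l ! \<sigma> k < l ! \<sigma> i" using ik1 sl[of k] sl[of i] by simp
      have "(i, k) \<noteq> (j, Suc j)" using ik notin by auto
      then have s1: "\<sigma> i < \<sigma> k" using ord ik1 by blast
      have s2: "\<sigma> k < length l" using \<sigma>lt ik1 by blast
      show ?thesis using pe' s1 s2 ik2 by simp
    qed
  qed
  have fin: "finite (?I (swp j l))" using finite_inv by blast
  have "(j, Suc j) \<notin> h ` ?I (swp j l)"
  proof
    assume "(j, Suc j) \<in> h ` ?I (swp j l)"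
    then obtain i k where "(i,k) \<in> ?I (swp j l)" "(\<sigma> i, \<sigma> k) = (j, Suc j)"
      by (auto simp: h_def)
    then have "i = Suc j" "k = j" by (auto simp: \<sigma>_def split: if_splits)
    with \<open>(i,k) \<in> ?I (swp j l)\<close> show False by auto
  qed
  then have "card (?I l) = Suc (card (?I (swp j l)))"
    using eq fin card_image[OF inj] by (simp add: card_insert_if)
  then show ?thesis by (simp add: inversions_def)
qed

lemma sign_swp:
  assumes j: "Suc j < length l" and ne: "l ! j \<noteq> l ! Suc j"
  shows "(-1::rat) ^ inversions (swp j l) = - ((-1) ^ inversions l)"
proof (cases "l ! Suc j < l ! j")
  case True
  then show ?thesis using inversions_swp[OF j True] by simp
next
  case False
  then have d: "swp j l ! Suc j < swp j l ! j" using ne j by (auto simp: nth_swp)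
  have "inversions (swp j l) = Suc (inversions (swp j (swp j l)))"
    using inversions_swp[OF _ d] j by simp
  then show ?thesis using swp_swp[OF j] by simp
qed

lemma echain_swp:
  assumes j: "Suc j < length l"
  shows "echain (swp j l) = (\<lambda>t. - echain l t)"
proof (cases "distinct l")
  case True
  then have ne: "l ! j \<noteq> l ! Suc j" using j by (simp add: nth_eq_iff_index_eq)
  show ?thesis using True j sign_swp[OF j ne]
    by (auto simp: echain_def set_swp distinct_swp)
next
  case False
  then show ?thesis using j by (auto simp: echain_def distinct_swp)
qed


lemma dell_swp_lt: "i < j \<Longrightarrow> Suc j < length l \<Longrightarrow> dell i (swp j l) = swp (j - 1) (dell i l)"
  by (rule nth_equalityI) (auto simp: nth_dell nth_swp)

lemma dell_swp_gt: "Suc j < i \<Longrightarrow> i < length l \<Longrightarrow> dell i (swp j l) = swp j (dell i l)"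
  by (rule nth_equalityI) (auto simp: nth_dell nth_swp)

lemma dell_swp_j: "Suc j < length l \<Longrightarrow> dell j (swp j l) = dell (Suc j) l"
  by (rule nth_equalityI) (auto simp: nth_dell nth_swp less_Suc_eq)

lemma dell_swp_Sj: "Suc j < length l \<Longrightarrow> dell (Suc j) (swp j l) = dell j l"
  by (rule nth_equalityI) (auto simp: nth_dell nth_swp less_Suc_eq)

lemma dL_swp:
  assumes j: "Suc j < length l"
  shows "dL (swp j l) = (\<lambda>t. - dL l t)"
proof
  fix t
  let ?n = "length l"
  define F where "F i = (-1::rat) ^ i * echain (dell i l) t" for i
  define \<tau> where "\<tau> i = (if i = j then Suc j else if i = Suc j then j else i)" for i
  have G: "(-1::rat) ^ i * echain (dell i (swp j l)) t = - F (\<tau> i)" if i: "i < ?n" for i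
  proof -
    consider "i < j" | "i = j" | "i = Suc j" | "Suc j < i" by linarith
    then show ?thesis
    proof cases
      case 1
      have "Suc (j - 1) < length (dell i l)" using 1 j by simp
      then show ?thesis using 1 j
        by (simp add: dell_swp_lt echain_swp F_def \<tau>_def)
    next
      case 2
      then show ?thesis using j by (simp add: dell_swp_j F_def \<tau>_def)
    next
      case 3
      then show ?thesis using j by (simp add: dell_swp_Sj F_def \<tau>_def)
    next
      case 4
      have "Suc j < length (dell i l)" using 4 i by simp
      then show ?thesis using 4 i
        by (simp add: dell_swp_gt echain_swp F_def \<tau>_def)
    qed
  qed
  have "dL (swp j l) t = (\<Sum>i<?n. (-1::rat) ^ i * echain (dell i (swp j l)) t)"
    by (simp add: dL_def)
  also have "\<dots> = (\<Sum>i<?n. - F (\<tau> i))"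
    by (rule sum.cong) (simp_all add: G)
  also have "\<dots> = - (\<Sum>i<?n. F (\<tau> i))" by (simp add: sum_negf)
  also have "(\<Sum>i<?n. F (\<tau> i)) = (\<Sum>i<?n. F i)"
    by (rule sum.reindex_bij_witness[where i=\<tau> and j=\<tau>]) (use j in \<open>auto simp: \<tau>_def\<close>)
  finally show "dL (swp j l) t = - dL l t" by (simp add: dL_def F_def)
qed

lemma inversions_sorted: "sorted l \<Longrightarrow> inversions l = 0"
proof -
  assume "sorted l"
  then have "{(i, j). i < j \<and> j < length l \<and> l ! j < l ! i} = {}"
    by (auto simp: sorted_iff_nth_mono not_less) (meson less_imp_le_nat not_le)
  then show ?thesis unfolding inversions_def by (metis card.empty)
qed

lemma not_sorted_descent: "\<not> sorted l \<Longrightarrow> \<exists>j. Suc j < length l \<and> l ! Suc j < l ! j"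
  by (auto simp: sorted_iff_nth_Suc not_le)

lemma sorted_distinct_sls: "sorted l \<Longrightarrow> distinct l \<Longrightarrow> sorted_list_of_set (set l) = l"
  by (simp add: sorted_list_of_set_sort_remdups distinct_remdups_id sorted_sort_id)

lemma dL_sort:
  "distinct l \<Longrightarrow> dL l = (\<lambda>t. (-1) ^ inversions l * dL (sorted_list_of_set (set l)) t)"
proof (induction "inversions l" arbitrary: l rule: less_induct)
  case less
  show ?case
  proof (cases "sorted l")
    case True
    then show ?thesis using less.prems by (simp add: inversions_sorted sorted_distinct_sls)
  next
    case False
    then obtain j where j: "Suc j < length l" "l ! Suc j < l ! j"
      using not_sorted_descent by blast
    have inv: "inversions l = Suc (inversions (swp j l))" using inversions_swp[OF j] .
    have IH: "dL (swp j l) = (\<lambda>t. (-1) ^ inversions (swp j l) * dL (sorted_list_of_set (set (swp j l))) t)"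
      using less.hyps[of "swp j l"] inv less.prems j by (simp add: distinct_swp)
    have "dL l = (\<lambda>t. - dL (swp j l) t)"
      using dL_swp[of j "swp j l"] j by (simp add: swp_swp)
    then show ?thesis using IH inv j by (simp add: set_swp)
  qed
qed

lemma dL_nondistinct_aux:
  "a < b \<Longrightarrow> b < length l \<Longrightarrow> l ! a = l ! b \<Longrightarrow> dL l = (\<lambda>_. 0)"
proof (induction "b - a" arbitrary: a l rule: less_induct)
  case less
  show ?case
  proof (cases "b = Suc a")
    case True
    have "swp a l = l" using less.prems True
      by (intro nth_equalityI) (auto simp: nth_swp)
    then have "dL l = (\<lambda>t. - dL l t)" using dL_swp[of a l] less.prems True by simp
    show ?thesis
    proof
      fix t have "dL l t = - dL l t" using fun_cong[OF \<open>dL l = (\<lambda>t. - dL l t)\<close>] by simp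
      then show "dL l t = 0" by simp
    qed
  next
    case False
    let ?l = "swp a l"
    have "?l ! Suc a = ?l ! b" using less.prems False by (simp add: nth_swp)
    then have "dL ?l = (\<lambda>_. 0)"
      using less.hyps[of "Suc a" ?l] less.prems False by simp
    moreover have "dL ?l = (\<lambda>t. - dL l t)" using dL_swp[of a l] less.prems by simp
    ultimately show ?thesis by (metis add.inverse_neutral minus_equation_iff)
  qed
qed

lemma dL_nondistinct: "\<not> distinct l \<Longrightarrow> dL l = (\<lambda>_. 0)"
proof -
  assume "\<not> distinct l"
  then obtain a b where "a < length l" "b < length l" "a \<noteq> b" "l ! a = l ! b"
    by (auto simp: distinct_conv_nth)
  then show ?thesis
  proof (cases "a < b")
    case True then show ?thesis using \<open>b < length l\<close> \<open>l ! a = l ! b\<close> by (rule dL_nondistinct_aux)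
  next
    case False then have "b < a" using \<open>a \<noteq> b\<close> by simp
    then show ?thesis using \<open>a < length l\<close> \<open>l ! a = l ! b\<close> by (intro dL_nondistinct_aux[of b a l]) auto
  qed
qed


lemma dell_dell: "i \<le> k \<Longrightarrow> Suc k < length l \<Longrightarrow> dell k (dell i l) = dell i (dell (Suc k) l)"
  by (rule nth_equalityI) (auto simp: nth_dell)

lemma ddL: "(\<lambda>t. \<Sum>i<length l. (-1) ^ i * dL (dell i l) t) = (\<lambda>_. 0)"
proof
  fix t
  let ?n = "length l"
  define T where "T = (\<lambda>(i, k). (-1::rat) ^ (i + k) * echain (dell k (dell i l)) t)"
  define P1 where "P1 = {(i, k). i < ?n \<and> k < ?n - 1 \<and> k < i}"
  define P2 where "P2 = {(i, k). i < ?n \<and> k < ?n - 1 \<and> i \<le> k}"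
  have "(\<Sum>i<?n. (-1) ^ i * dL (dell i l) t) = (\<Sum>i<?n. \<Sum>k<?n - 1. T (i, k))"
    by (rule sum.cong) (auto simp: dL_def T_def sum_distrib_left power_add mult.assoc)
  also have "\<dots> = (\<Sum>p\<in>{..<?n} \<times> {..<?n - 1}. T p)"
    by (simp add: sum.cartesian_product)
  also have "{..<?n} \<times> {..<?n - 1} = P1 \<union> P2" by (auto simp: P1_def P2_def)
  also have "(\<Sum>p\<in>P1 \<union> P2. T p) = (\<Sum>p\<in>P1. T p) + (\<Sum>p\<in>P2. T p)"
    by (rule sum.union_disjoint)
       (auto simp: P1_def P2_def intro: finite_subset[of _ "{..<?n} \<times> {..<?n}"])
  also have "(\<Sum>p\<in>P2. T p) = (\<Sum>p\<in>P1. - T p)"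
  proof (rule sum.reindex_bij_witness[where i="\<lambda>(i, k). (k, i - 1)" and j="\<lambda>(i, k). (Suc k, i)"])
    fix p assume "p \<in> P2"
    then obtain i k where p: "p = (i, k)" "i < ?n" "k < ?n - 1" "i \<le> k"
      by (auto simp: P2_def)
    show "(case (case p of (i, k) \<Rightarrow> (Suc k, i)) of (i, k) \<Rightarrow> (k, i - 1)) = p" using p by simp
    show "(case p of (i, k) \<Rightarrow> (Suc k, i)) \<in> P1" using p by (auto simp: P1_def)
    have "dell k (dell i l) = dell i (dell (Suc k) l)" using p by (intro dell_dell) auto
    then show "- T (case p of (i, k) \<Rightarrow> (Suc k, i)) = T p"
      using p by (simp add: T_def add.commute)
  next
    fix p assume "p \<in> P1"
    then obtain i k where p: "p = (i, k)" "i < ?n" "k < ?n - 1" "k < i"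
      by (auto simp: P1_def)
    show "(case (case p of (i, k) \<Rightarrow> (k, i - 1)) of (i, k) \<Rightarrow> (Suc k, i)) = p" using p by simp
    show "(case p of (i, k) \<Rightarrow> (k, i - 1)) \<in> P2" using p by (auto simp: P2_def)
  qed
  finally show "(\<Sum>i<?n. (-1) ^ i * dL (dell i l) t) = 0" by (simp add: sum_negf)
qed


lemma simplicesD: "s \<in> simplices X adj q \<Longrightarrow> finite s \<and> card s = Suc q \<and> s \<subseteq> X"
  by (auto simp: simplices_def)

lemma simplex_subset:
  "s \<in> simplices X adj q \<Longrightarrow> t \<subseteq> s \<Longrightarrow> card t = Suc q' \<Longrightarrow> t \<in> simplices X adj q'"
  unfolding simplices_def using finite_subset by blast

lemma sls_props:
  assumes "finite s"
  shows "distinct (sorted_list_of_set s)" "sorted (sorted_list_of_set s)"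
    "set (sorted_list_of_set s) = s" "length (sorted_list_of_set s) = card s"
  using assms by auto

lemma echain_sorted: "sorted l \<Longrightarrow> distinct l \<Longrightarrow> echain l = (\<lambda>t. if set l = t then 1 else 0)"
  by (auto simp: echain_def inversions_sorted)

lemma set_dell: "distinct l \<Longrightarrow> i < length l \<Longrightarrow> set (dell i l) = set l - {l ! i}"
proof -
  assume d: "distinct l" and i: "i < length l"
  have e: "l = take i l @ l ! i # drop (Suc i) l" using id_take_nth_drop[OF i] .
  have "distinct (take i l @ l ! i # drop (Suc i) l)" using d e by simp
  then show ?thesis unfolding dell_def by (subst (3) e) auto
qed

lemma distinct_dell: "distinct l \<Longrightarrow> i < length l \<Longrightarrow> distinct (dell i l)"
proof -
  assume d: "distinct l" and i: "i < length l"
  have e: "l = take i l @ l ! i # drop (Suc i) l" using id_take_nth_drop[OF i] .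
  have "distinct (take i l @ l ! i # drop (Suc i) l)" using d e by simp
  then show ?thesis unfolding dell_def by auto
qed

lemma sorted_dell: "sorted l \<Longrightarrow> i < length l \<Longrightarrow> sorted (dell i l)"
  by (auto simp: sorted_iff_nth_mono nth_dell)

lemma dell_map: "i < length l \<Longrightarrow> dell i (map f l) = map f (dell i l)"
  by (simp add: dell_def take_map drop_map)

lemma bdry_alt:
  "bdry X adj (Suc p) x = (\<lambda>t. \<Sum>s\<in>simplices X adj (Suc p). x s * dL (sorted_list_of_set s) t)"
proof
  fix t
  show "bdry X adj (Suc p) x t = (\<Sum>s\<in>simplices X adj (Suc p). x s * dL (sorted_list_of_set s) t)"
    unfolding bdry_def
  proof (simp del: sum.lessThan_Suc, rule sum.cong[OF refl])
    fix s assume s: "s \<in> simplices X adj (Suc p)"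
    let ?l = "sorted_list_of_set s"
    have fs: "finite s" "card s = Suc (Suc p)" using simplicesD[OF s] by auto
    have len: "length ?l = Suc (Suc p)" using fs by simp
    have "x s * dL ?l t = (\<Sum>i<Suc (Suc p). x s * ((-1) ^ i * echain (dell i ?l) t))"
      using fs by (simp add: dL_def sum_distrib_left del: sum.lessThan_Suc)
    also have "\<dots> = (\<Sum>i<Suc (Suc p). if s - {?l ! i} = t then (-1) ^ i * x s else 0)"
    proof (rule sum.cong[OF refl])
      fix i assume i: "i \<in> {..<Suc (Suc p)}"
      have "echain (dell i ?l) = (\<lambda>t. if set (dell i ?l) = t then 1 else 0)"
        using i len fs by (intro echain_sorted sorted_dell distinct_dell) auto
      moreover have "set (dell i ?l) = s - {?l ! i}" using i len fs by (simp add: set_dell)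
      ultimately show "x s * ((-1) ^ i * echain (dell i ?l) t) = (if s - {?l ! i} = t then (-1) ^ i * x s else 0)"
        by (simp del: sum.lessThan_Suc)
    qed
    finally show "(\<Sum>i<Suc (Suc p). if s - {?l ! i} = t then (-1) ^ i * x s else 0) = x s * dL ?l t"
      by (simp del: sum.lessThan_Suc)
  qed
qed

lemma distinct_map_iff:
  assumes "s \<in> simplices X adj q"
  shows "distinct (map f (sorted_list_of_set s)) \<longleftrightarrow> card (f ` s) = Suc q"
proof -
  have fs: "finite s" "card s = Suc q" using simplicesD[OF assms] by auto
  have "set (map f (sorted_list_of_set s)) = f ` s" using fs by simp
  moreover have "length (map f (sorted_list_of_set s)) = Suc q" using fs by simp
  ultimately show ?thesis by (metis card_distinct distinct_card)
qed

lemma chain_map_alt: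
  "chain_map X adj f q x = (\<lambda>t. \<Sum>s\<in>simplices X adj q. x s * echain (map f (sorted_list_of_set s)) t)"
proof
  fix t
  show "chain_map X adj f q x t = (\<Sum>s\<in>simplices X adj q. x s * echain (map f (sorted_list_of_set s)) t)"
    unfolding chain_map_def
  proof (rule sum.cong[OF refl])
    fix s assume s: "s \<in> simplices X adj q"
    have fs: "finite s" using simplicesD[OF s] by auto
    show "(if f ` s = t \<and> card (f ` s) = Suc q
          then (-1) ^ inversions (map f (sorted_list_of_set s)) * x s else 0) =
          x s * echain (map f (sorted_list_of_set s)) t"
      using distinct_map_iff[OF s, of f] fs by (auto simp: echain_def)
  qed
qed

lemma bdry_lin:
  assumes "finite A"
  shows "bdry X adj q (\<lambda>t. \<Sum>a\<in>A. c a * v a t) = (\<lambda>t. \<Sum>a\<in>A. c a * bdry X adj q (v a) t)"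
proof (cases q)
  case 0
  then show ?thesis by (simp add: bdry_def)
next
  case (Suc p)
  show ?thesis unfolding Suc bdry_alt
    by (simp add: sum_distrib_right sum_distrib_left mult.assoc sum.swap[of _ A])
qed

lemma chain_map_lin:
  assumes "finite A"
  shows "chain_map X adj f q (\<lambda>t. \<Sum>a\<in>A. c a * v a t) = (\<lambda>t. \<Sum>a\<in>A. c a * chain_map X adj f q (v a) t)"
  unfolding chain_map_alt
  by (simp add: sum_distrib_right sum_distrib_left mult.assoc sum.swap[of _ A])

lemma finite_simplices: "finite X \<Longrightarrow> finite (simplices X adj q)"
  by (rule finite_subset[of _ "Pow X"]) (auto simp: simplices_def)

lemma bdry_echain:
  assumes fX: "finite X" and len: "length m = Suc (Suc p)" and sm: "distinct m \<Longrightarrow> set m \<in> simplices X adj (Suc p)"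
  shows "bdry X adj (Suc p) (echain m) = dL m"
proof (cases "distinct m")
  case True
  show ?thesis
  proof
    fix t
    have "bdry X adj (Suc p) (echain m) t =
      (\<Sum>s\<in>simplices X adj (Suc p). if s = set m then (-1) ^ inversions m * dL (sorted_list_of_set s) t else 0)"
      unfolding bdry_alt by (rule sum.cong) (auto simp: echain_def True)
    also have "\<dots> = (-1) ^ inversions m * dL (sorted_list_of_set (set m)) t"
      using sm[OF True] finite_simplices[OF fX] by (simp add: sum.delta)
    also have "\<dots> = dL m t" using dL_sort[OF True] by simp
    finally show "bdry X adj (Suc p) (echain m) t = dL m t" .
  qed
next
  case False
  then have "echain m = (\<lambda>_. 0)" by (simp add: echain_def)
  then show ?thesis using dL_nondistinct[OF False] by (simp add: bdry_alt)
qed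

lemma bdry_dL_sls:
  assumes fX: "finite X" and s: "s \<in> simplices X adj (Suc (Suc p))"
  shows "bdry X adj (Suc p) (dL (sorted_list_of_set s)) = (\<lambda>_. 0)"
proof -
  let ?l = "sorted_list_of_set s"
  have fs: "finite s" "card s = Suc (Suc (Suc p))" using simplicesD[OF s] by auto
  have len: "length ?l = Suc (Suc (Suc p))" using fs by simp
  have "bdry X adj (Suc p) (dL ?l) =
        (\<lambda>t. \<Sum>i<length ?l. (-1) ^ i * bdry X adj (Suc p) (echain (dell i ?l)) t)"
    unfolding dL_def by (rule bdry_lin) simp
  also have "\<dots> = (\<lambda>t. \<Sum>i<length ?l. (-1) ^ i * dL (dell i ?l) t)"
  proof (intro ext sum.cong refl)
    fix t i assume i: "i \<in> {..<length ?l}"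
    have "bdry X adj (Suc p) (echain (dell i ?l)) = dL (dell i ?l)"
    proof (rule bdry_echain[OF fX])
      show "length (dell i ?l) = Suc (Suc p)" using i len by simp
      have "set (dell i ?l) \<subseteq> s" using i fs by (simp add: set_dell)
      moreover have "card (set (dell i ?l)) = Suc (Suc p)"
        using i fs len by (simp add: distinct_card distinct_dell)
      ultimately show "set (dell i ?l) \<in> simplices X adj (Suc p)"
        using simplex_subset[OF s] by blast
    qed
    then show "(-1) ^ i * bdry X adj (Suc p) (echain (dell i ?l)) t = (-1) ^ i * dL (dell i ?l) t"
      by simp
  qed
  also have "\<dots> = (\<lambda>_. 0)" by (rule ddL)
  finally show ?thesis .
qed

lemma bdry_bdry: assumes "finite X" shows "bdry X adj q (bdry X adj (Suc q) c) = (\<lambda>_. 0)"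
proof (cases q)
  case 0
  then show ?thesis by (simp add: bdry_def)
next
  case (Suc p)
  have "bdry X adj q (bdry X adj (Suc q) c) =
    (\<lambda>t. \<Sum>s\<in>simplices X adj (Suc (Suc p)). c s * bdry X adj (Suc p) (dL (sorted_list_of_set s)) t)"
    unfolding Suc bdry_alt[of X adj "Suc p"] by (rule bdry_lin) (simp add: finite_simplices \<open>finite X\<close>)
  also have "\<dots> = (\<lambda>_. 0)" by (simp add: bdry_dL_sls \<open>finite X\<close>)
  finally show ?thesis .
qed


lemma image_simplex:
  assumes c: "digitally_continuous X adj f" and s: "s \<in> simplices X adj q"
    and cs: "card (f ` s) = Suc q"
  shows "f ` s \<in> simplices X adj q"
proof -
  have fs: "finite s" "s \<subseteq> X" using simplicesD[OF s] by auto
  have "f ` s \<subseteq> X" using c fs unfolding digitally_continuous_def by blast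
  moreover have "\<forall>x\<in>f ` s. \<forall>y\<in>f ` s. x \<noteq> y \<longrightarrow> adj x y"
  proof (intro ballI impI)
    fix x' y' assume "x' \<in> f ` s" "y' \<in> f ` s" "x' \<noteq> y'"
    then obtain x y where xy: "x \<in> s" "y \<in> s" "x' = f x" "y' = f y" by auto
    then have "x \<noteq> y" using \<open>x' \<noteq> y'\<close> by auto
    then have "adj x y" using s xy by (auto simp: simplices_def)
    then have "adj_eq adj (f x) (f y)" using c xy fs unfolding digitally_continuous_def by blast
    then show "adj x' y'" using xy \<open>x' \<noteq> y'\<close> by (auto simp: adj_eq_def)
  qed
  ultimately show ?thesis using fs cs by (auto simp: simplices_def)
qed

lemma cm_echain:
  assumes fX: "finite X" and l: "sorted l" "distinct l" "set l \<in> simplices X adj p"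
  shows "chain_map X adj f p (echain l) = echain (map f l)"
proof
  fix t
  have "chain_map X adj f p (echain l) t =
     (\<Sum>s\<in>simplices X adj p. if s = set l then echain (map f (sorted_list_of_set s)) t else 0)"
    unfolding chain_map_alt by (rule sum.cong) (auto simp: echain_sorted l)
  also have "\<dots> = echain (map f l) t"
    using l finite_simplices[OF fX] by (simp add: sum.delta sorted_distinct_sls)
  finally show "chain_map X adj f p (echain l) t = echain (map f l) t" .
qed

lemma bdry_chain_map:
  assumes fX: "finite X" and c: "digitally_continuous X adj f"
  shows "bdry X adj (Suc p) (chain_map X adj f (Suc p) x) = chain_map X adj f p (bdry X adj (Suc p) x)"
proof -
  have fin: "finite (simplices X adj q)" for q using finite_simplices[OF fX] .
  have L: "\<And>s. s \<in> simplices X adj (Suc p) \<Longrightarrow>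
      bdry X adj (Suc p) (echain (map f (sorted_list_of_set s))) = dL (map f (sorted_list_of_set s))"
  proof (rule bdry_echain[OF fX])
    fix s assume s: "s \<in> simplices X adj (Suc p)"
    have fs: "finite s" "card s = Suc (Suc p)" using simplicesD[OF s] by auto
    show "length (map f (sorted_list_of_set s)) = Suc (Suc p)" using fs by simp
    assume "distinct (map f (sorted_list_of_set s))"
    then have "card (f ` s) = Suc (Suc p)" using distinct_map_iff[OF s, of f] by simp
    then have "f ` s \<in> simplices X adj (Suc p)" by (rule image_simplex[OF c s])
    then show "set (map f (sorted_list_of_set s)) \<in> simplices X adj (Suc p)" using fs by simp
  qed
  have R: "\<And>s. s \<in> simplices X adj (Suc p) \<Longrightarrow>
      chain_map X adj f p (dL (sorted_list_of_set s)) = dL (map f (sorted_list_of_set s))"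
  proof -
    fix s assume s: "s \<in> simplices X adj (Suc p)"
    let ?l = "sorted_list_of_set s"
    have fs: "finite s" "card s = Suc (Suc p)" using simplicesD[OF s] by auto
    have len: "length ?l = Suc (Suc p)" using fs by simp
    have "chain_map X adj f p (dL ?l) =
        (\<lambda>t. \<Sum>i<length ?l. (-1) ^ i * chain_map X adj f p (echain (dell i ?l)) t)"
      unfolding dL_def by (rule chain_map_lin) simp
    also have "\<dots> = (\<lambda>t. \<Sum>i<length ?l. (-1) ^ i * echain (dell i (map f ?l)) t)"
    proof (intro ext sum.cong refl)
      fix t i assume i: "i \<in> {..<length ?l}"
      have "chain_map X adj f p (echain (dell i ?l)) = echain (map f (dell i ?l))"
      proof (rule cm_echain[OF fX])
        show "sorted (dell i ?l)" using i by (simp add: sorted_dell)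
        show "distinct (dell i ?l)" using i fs by (simp add: distinct_dell)
        have "set (dell i ?l) \<subseteq> s" using i fs by (simp add: set_dell)
        moreover have "card (set (dell i ?l)) = Suc p"
          using i fs len by (simp add: distinct_card distinct_dell)
        ultimately show "set (dell i ?l) \<in> simplices X adj p"
          using simplex_subset[OF s] by blast
      qed
      then show "(-1) ^ i * chain_map X adj f p (echain (dell i ?l)) t =
                 (-1) ^ i * echain (dell i (map f ?l)) t"
        using i by (simp add: dell_map)
    qed
    also have "\<dots> = dL (map f ?l)" by (simp add: dL_def)
    finally show "chain_map X adj f p (dL ?l) = dL (map f ?l)" .
  qed
  have "bdry X adj (Suc p) (chain_map X adj f (Suc p) x) =
     (\<lambda>t. \<Sum>s\<in>simplices X adj (Suc p). x s * bdry X adj (Suc p) (echain (map f (sorted_list_of_set s))) t)"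
    unfolding chain_map_alt by (rule bdry_lin) (rule fin)
  also have "\<dots> = (\<lambda>t. \<Sum>s\<in>simplices X adj (Suc p). x s * dL (map f (sorted_list_of_set s)) t)"
    by (intro ext sum.cong refl) (simp add: L)
  also have "\<dots> = (\<lambda>t. \<Sum>s\<in>simplices X adj (Suc p). x s * chain_map X adj f p (dL (sorted_list_of_set s)) t)"
    by (intro ext sum.cong refl) (simp add: R)
  also have "\<dots> = chain_map X adj f p (bdry X adj (Suc p) x)"
    unfolding bdry_alt by (rule chain_map_lin[symmetric]) (rule fin)
  finally show ?thesis .
qed


lemma sum_nonzero_ex: "sum g A \<noteq> 0 \<Longrightarrow> \<exists>a\<in>A. g a \<noteq> 0"
  by (meson sum.neutral)

lemma chain_map_chains:
  assumes c: "digitally_continuous X adj f"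
  shows "chain_map X adj f q x \<in> chains X adj q"
  unfolding chains_def
proof (intro CollectI allI impI)
  fix t assume nz: "chain_map X adj f q x t \<noteq> 0"
  obtain s where s: "s \<in> simplices X adj q" and
    "(if f ` s = t \<and> card (f ` s) = Suc q
          then (-1) ^ inversions (map f (sorted_list_of_set s)) * x s else 0) \<noteq> 0"
    using sum_nonzero_ex[OF nz[unfolded chain_map_def]] by blast
  then have "f ` s = t" "card (f ` s) = Suc q" by (auto split: if_splits)
  then show "t \<in> simplices X adj q" using image_simplex[OF c s] by simp
qed

lemma bdry_chains:
  shows "bdry X adj (Suc q) x \<in> chains X adj q"
  unfolding chains_def
proof (intro CollectI allI impI)
  fix t assume nz: "bdry X adj (Suc q) x t \<noteq> 0"
  have "(\<Sum>s\<in>simplices X adj (Suc q). \<Sum>i<Suc (Suc q). if s - {sorted_list_of_set s ! i} = t then (-1) ^ i * x s else 0) \<noteq> 0"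
    using nz unfolding bdry_def by (simp del: sum.lessThan_Suc)
  from sum_nonzero_ex[OF this] obtain s where s: "s \<in> simplices X adj (Suc q)" and
    nz2: "(\<Sum>i<Suc (Suc q). if s - {sorted_list_of_set s ! i} = t then (-1) ^ i * x s else 0) \<noteq> 0"
    by blast
  from sum_nonzero_ex[OF nz2] obtain i where i: "i < Suc (Suc q)"
    and "(if s - {sorted_list_of_set s ! i} = t then (-1::rat) ^ i * x s else 0) \<noteq> 0"
    by blast
  then have e: "s - {sorted_list_of_set s ! i} = t" by (auto split: if_splits)
  have fs: "finite s" "card s = Suc (Suc q)" using simplicesD[OF s] by auto
  have "sorted_list_of_set s ! i \<in> s"
    using i fs by (metis length_sorted_list_of_set nth_mem set_sorted_list_of_set)
  then have "t \<subseteq> s" "card t = Suc q" using e fs by auto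
  then show "t \<in> simplices X adj q" using simplex_subset[OF s] by blast
qed


definition lc :: "nat \<Rightarrow> (nat \<Rightarrow> rat) \<Rightarrow> (nat \<Rightarrow> 'b \<Rightarrow> rat) \<Rightarrow> 'b \<Rightarrow> rat" where
  "lc k c z = (\<lambda>x. \<Sum>i<k. c i * z i x)"

definition subsp :: "('b \<Rightarrow> rat) set \<Rightarrow> bool" where
  "subsp W \<longleftrightarrow> (\<lambda>_. 0) \<in> W \<and> (\<forall>u\<in>W. \<forall>v\<in>W. (\<lambda>x. u x + v x) \<in> W) \<and> (\<forall>c. \<forall>u\<in>W. (\<lambda>x. c * u x) \<in> W)"

definition linS :: "(('b \<Rightarrow> rat) \<Rightarrow> ('c \<Rightarrow> rat)) \<Rightarrow> bool" where
  "linS g \<longleftrightarrow> (\<forall>(A::nat set) c u. finite A \<longrightarrow>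
      g (\<lambda>x. \<Sum>i\<in>A. c i * u i x) = (\<lambda>x. \<Sum>i\<in>A. c i * g (u i) x))"

definition eqv :: "('b \<Rightarrow> rat) set \<Rightarrow> ('b \<Rightarrow> rat) \<Rightarrow> ('b \<Rightarrow> rat) \<Rightarrow> bool" where
  "eqv W u v \<longleftrightarrow> (\<lambda>x. u x - v x) \<in> W"

definition valid :: "('b \<Rightarrow> rat) set \<Rightarrow> ('b \<Rightarrow> rat) set \<Rightarrow> (('b \<Rightarrow> rat) \<Rightarrow> ('b \<Rightarrow> rat))
   \<Rightarrow> nat \<Rightarrow> (nat \<Rightarrow> 'b \<Rightarrow> rat) \<Rightarrow> (nat \<Rightarrow> nat \<Rightarrow> rat) \<Rightarrow> bool" where
  "valid Z B g k z a \<longleftrightarrow> (\<forall>i<k. z i \<in> Z) \<and>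
      (\<forall>c. lc k c z \<in> B \<longrightarrow> (\<forall>i<k. c i = 0)) \<and>
      (\<forall>w\<in>Z. \<exists>c. eqv B w (lc k c z)) \<and>
      (\<forall>i<k. eqv B (g (z i)) (lc k (a i) z))"

lemma quot_trace_valid:
  "quot_trace Z B g = (SOME t. \<exists>k z a. valid Z B g k z a \<and> t = (\<Sum>i<k. a i i))"
  unfolding quot_trace_def valid_def lc_def eqv_def by simp

lemma quot_trace_eq:
  assumes v: "valid Z B g k z a"
    and u: "\<And>k' z' a'. valid Z B g k' z' a' \<Longrightarrow> (\<Sum>i<k'. a' i i) = (\<Sum>i<k. a i i)"
  shows "quot_trace Z B g = (\<Sum>i<k. a i i)"
  unfolding quot_trace_valid
proof (rule someI2[where a="\<Sum>i<k. a i i"])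
  show "\<exists>k' z' a'. valid Z B g k' z' a' \<and> (\<Sum>i<k. a i i) = (\<Sum>i<k'. a' i i)"
    using v by blast
next
  fix t assume "\<exists>k' z' a'. valid Z B g k' z' a' \<and> t = (\<Sum>i<k'. a' i i)"
  then obtain k' z' a' where "valid Z B g k' z' a'" "t = (\<Sum>i<k'. a' i i)" by blast
  then show "t = (\<Sum>i<k. a i i)" using u by simp
qed

lemma subsp_0: "subsp W \<Longrightarrow> (\<lambda>_. 0) \<in> W" by (simp add: subsp_def)
lemma subsp_add: "subsp W \<Longrightarrow> u \<in> W \<Longrightarrow> v \<in> W \<Longrightarrow> (\<lambda>x. u x + v x) \<in> W" by (simp add: subsp_def)
lemma subsp_smult: "subsp W \<Longrightarrow> u \<in> W \<Longrightarrow> (\<lambda>x. c * u x) \<in> W" by (simp add: subsp_def)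

lemma subsp_diff: "subsp W \<Longrightarrow> u \<in> W \<Longrightarrow> v \<in> W \<Longrightarrow> (\<lambda>x. u x - v x) \<in> W"
proof -
  assume W: "subsp W" and u: "u \<in> W" and v: "v \<in> W"
  have "(\<lambda>x. (-1) * v x) \<in> W" using subsp_smult[OF W v] .
  from subsp_add[OF W u this] show ?thesis by simp
qed

lemma subsp_sum: assumes W: "subsp W"
  shows "finite A \<Longrightarrow> (\<And>i. i \<in> A \<Longrightarrow> u i \<in> W) \<Longrightarrow> (\<lambda>x. \<Sum>i\<in>A. c i * u i x) \<in> W"
proof (induction A rule: finite_induct)
  case empty
  then show ?case using subsp_0[OF W] by simp
next
  case (insert a A)
  have 1: "(\<lambda>x. c a * u a x) \<in> W" using insert by (intro subsp_smult[OF W]) auto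
  have 2: "(\<lambda>x. \<Sum>i\<in>A. c i * u i x) \<in> W" using insert by auto
  have "(\<lambda>x. c a * u a x + (\<Sum>i\<in>A. c i * u i x)) \<in> W" using subsp_add[OF W 1 2] .
  then show ?case using insert(1,2) by simp
qed

lemma subsp_lc: "subsp W \<Longrightarrow> (\<And>i. i < k \<Longrightarrow> z i \<in> W) \<Longrightarrow> lc k c z \<in> W"
  unfolding lc_def by (rule subsp_sum) auto

lemma eqv_refl: "subsp W \<Longrightarrow> eqv W u u"
  using subsp_0 by (simp add: eqv_def)

lemma eqv_sym: "subsp W \<Longrightarrow> eqv W u v \<Longrightarrow> eqv W v u"
  unfolding eqv_def using subsp_smult[of W "\<lambda>x. u x - v x" "-1"] by simp

lemma eqv_trans: "subsp W \<Longrightarrow> eqv W u v \<Longrightarrow> eqv W v w \<Longrightarrow> eqv W u w"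
  unfolding eqv_def using subsp_add[of W "\<lambda>x. u x - v x" "\<lambda>x. v x - w x"] by simp

lemma eqv_eq_trans: "eqv W u v \<Longrightarrow> v = w \<Longrightarrow> eqv W u w" by simp

lemma lc_diff: "(\<lambda>x. lc k c z x - lc k d z x) = lc k (\<lambda>i. c i - d i) z"
  by (simp add: lc_def sum_subtractf left_diff_distrib)

lemma eqv_lc_cong: "subsp W \<Longrightarrow> (\<And>i. i < k \<Longrightarrow> eqv W (u i) (v i)) \<Longrightarrow> eqv W (lc k c u) (lc k c v)"
proof -
  assume W: "subsp W" and e: "\<And>i. i < k \<Longrightarrow> eqv W (u i) (v i)"
  have "lc k c (\<lambda>i x. u i x - v i x) \<in> W" using e by (intro subsp_lc[OF W]) (auto simp: eqv_def)
  moreover have "lc k c (\<lambda>i x. u i x - v i x) = (\<lambda>x. lc k c u x - lc k c v x)"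
    by (simp add: lc_def sum_subtractf right_diff_distrib)
  ultimately show ?thesis by (simp add: eqv_def)
qed

lemma lc_lc: "lc k c (\<lambda>j. lc n (d j) w) = lc n (\<lambda>m. \<Sum>j<k. c j * d j m) w"
  unfolding lc_def
  by (simp add: sum_distrib_left sum_distrib_right mult.assoc sum.swap[of _ "{..<k}"])

lemma linS_lc: "linS g \<Longrightarrow> g (lc k c z) = lc k c (\<lambda>i. g (z i))"
  unfolding linS_def lc_def by simp

lemma linS_sum: "linS g \<Longrightarrow> finite (A::nat set) \<Longrightarrow>
      g (\<lambda>x. \<Sum>i\<in>A. c i * u i x) = (\<lambda>x. \<Sum>i\<in>A. c i * g (u i) x)"
  unfolding linS_def by simp

lemma linS_diff: "linS g \<Longrightarrow> g (\<lambda>x. u x - v x) = (\<lambda>x. g u x - g v x)"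
proof -
  assume l: "linS g"
  define C where "C i = (if i = (0::nat) then (1::rat) else -1)" for i
  define U where "U i = (if i = (0::nat) then u else v)" for i
  have "g (\<lambda>x. \<Sum>i\<in>{0::nat, 1}. C i * U i x) = (\<lambda>x. \<Sum>i\<in>{0::nat, 1}. C i * g (U i) x)"
    by (rule linS_sum[OF l]) simp
  then show ?thesis by (simp add: C_def U_def)
qed

lemma linS_0: "linS g \<Longrightarrow> g (\<lambda>_. 0) = (\<lambda>_. 0)"
proof -
  assume l: "linS g"
  have "g (\<lambda>x. \<Sum>i\<in>({}::nat set). (\<lambda>_. 0::rat) i * (\<lambda>_ _. 0) i x) =
        (\<lambda>x. \<Sum>i\<in>({}::nat set). (\<lambda>_. 0::rat) i * g ((\<lambda>_ _. 0) i) x)"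
    by (rule linS_sum[OF l]) simp
  then show ?thesis by simp
qed

lemma eqv_map: "linS g \<Longrightarrow> (\<forall>b\<in>B. g b \<in> B) \<Longrightarrow> eqv B u v \<Longrightarrow> eqv B (g u) (g v)"
  unfolding eqv_def by (simp add: linS_diff[symmetric])

lemma lc_delta: "l < k \<Longrightarrow> lc k (\<lambda>j. if j = l then 1 else 0) z = z l"
proof
  fix x assume l: "l < k"
  have "(\<Sum>i<k. (if i = l then 1 else 0) * z i x) = (\<Sum>i<k. if i = l then z i x else 0)"
    by (rule sum.cong) auto
  then show "lc k (\<lambda>j. if j = l then 1 else 0) z x = z l x" using l by (simp add: lc_def)
qed

lemma indep_eq:
  assumes W: "subsp W" and ind: "\<forall>c. lc k c z \<in> W \<longrightarrow> (\<forall>i<k. c i = 0)"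
    and e: "eqv W (lc k c z) (lc k d z)" and i: "i < k"
  shows "c i = d i"
proof -
  have "lc k (\<lambda>i. c i - d i) z \<in> W" using e by (simp add: eqv_def lc_diff)
  then show ?thesis using ind i by fastforce
qed


lemma trace_unique:
  assumes B: "subsp B" and l: "linS g" and gB: "\<forall>b\<in>B. g b \<in> B"
    and V1: "valid Z B g k z a" and V2: "valid Z B g k' z' a'"
  shows "(\<Sum>i<k'. a' i i) = (\<Sum>i<k. a i i)"
proof -
  have zZ: "\<forall>i<k. z i \<in> Z" and ind1: "\<forall>c. lc k c z \<in> B \<longrightarrow> (\<forall>i<k. c i = 0)"
    and sp1: "\<forall>w\<in>Z. \<exists>c. eqv B w (lc k c z)" and m1: "\<forall>i<k. eqv B (g (z i)) (lc k (a i) z)"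
    using V1 unfolding valid_def by blast+
  have z'Z: "\<forall>i<k'. z' i \<in> Z" and ind2: "\<forall>c. lc k' c z' \<in> B \<longrightarrow> (\<forall>i<k'. c i = 0)"
    and sp2: "\<forall>w\<in>Z. \<exists>c. eqv B w (lc k' c z')" and m2: "\<forall>i<k'. eqv B (g (z' i)) (lc k' (a' i) z')"
    using V2 unfolding valid_def by blast+
  have "\<forall>i. \<exists>c. i < k' \<longrightarrow> eqv B (z' i) (lc k c z)" using sp1 z'Z by blast
  from choice[OF this] obtain P where P0: "\<forall>i. i < k' \<longrightarrow> eqv B (z' i) (lc k (P i) z)" by blast
  then have P: "\<And>i. i < k' \<Longrightarrow> eqv B (z' i) (lc k (P i) z)" by blast
  have "\<forall>i. \<exists>c. i < k \<longrightarrow> eqv B (z i) (lc k' c z')" using sp2 zZ by blast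
  from choice[OF this] obtain Q where Q0: "\<forall>i. i < k \<longrightarrow> eqv B (z i) (lc k' (Q i) z')" by blast
  then have Q: "\<And>i. i < k \<Longrightarrow> eqv B (z i) (lc k' (Q i) z')" by blast
  define R where "R i m = (\<Sum>j<k. \<Sum>l<k. P i j * a j l * Q l m)" for i m
  have A: "a' i m = R i m" if i: "i < k'" and m: "m < k'" for i m
  proof -
    have e1: "eqv B (lc k' (a' i) z') (g (z' i))" using m2 i eqv_sym[OF B] by blast
    have e2: "eqv B (g (z' i)) (g (lc k (P i) z))" using eqv_map[OF l gB P[OF i]] .
    have e3: "g (lc k (P i) z) = lc k (P i) (\<lambda>j. g (z j))" using linS_lc[OF l] .
    have e4: "eqv B (lc k (P i) (\<lambda>j. g (z j))) (lc k (P i) (\<lambda>j. lc k (a j) z))"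
      using m1 by (intro eqv_lc_cong[OF B]) auto
    have e5: "lc k (P i) (\<lambda>j. lc k (a j) z) = lc k (\<lambda>l. \<Sum>j<k. P i j * a j l) z" by (rule lc_lc)
    have e6: "eqv B (lc k (\<lambda>l. \<Sum>j<k. P i j * a j l) z) (lc k (\<lambda>l. \<Sum>j<k. P i j * a j l) (\<lambda>l. lc k' (Q l) z'))"
      using Q by (intro eqv_lc_cong[OF B]) auto
    have e7: "lc k (\<lambda>l. \<Sum>j<k. P i j * a j l) (\<lambda>l. lc k' (Q l) z') = lc k' (R i) z'"
    proof -
      have "(\<lambda>m. \<Sum>l<k. (\<Sum>j<k. P i j * a j l) * Q l m) = R i"
      proof
        fix m
        have "(\<Sum>l<k. (\<Sum>j<k. P i j * a j l) * Q l m) = (\<Sum>l<k. \<Sum>j<k. P i j * a j l * Q l m)"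
          by (simp add: sum_distrib_right)
        also have "\<dots> = R i m" unfolding R_def by (rule sum.swap)
        finally show "(\<Sum>l<k. (\<Sum>j<k. P i j * a j l) * Q l m) = R i m" .
      qed
      then show ?thesis by (simp only: lc_lc)
    qed
    have "eqv B (lc k' (a' i) z') (g (lc k (P i) z))" by (rule eqv_trans[OF B e1 e2])
    then have "eqv B (lc k' (a' i) z') (lc k (P i) (\<lambda>j. g (z j)))" by (simp only: e3)
    then have "eqv B (lc k' (a' i) z') (lc k (P i) (\<lambda>j. lc k (a j) z))" by (rule eqv_trans[OF B _ e4])
    then have "eqv B (lc k' (a' i) z') (lc k (\<lambda>l. \<Sum>j<k. P i j * a j l) z)" by (simp only: e5)
    then have "eqv B (lc k' (a' i) z') (lc k (\<lambda>l. \<Sum>j<k. P i j * a j l) (\<lambda>l. lc k' (Q l) z'))"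
      by (rule eqv_trans[OF B _ e6])
    then have "eqv B (lc k' (a' i) z') (lc k' (R i) z')" by (simp only: e7)
    then show ?thesis using indep_eq[OF B ind2 _ m] by blast
  qed
  have QP: "(\<Sum>i<k'. Q l i * P i j) = (if l = j then 1 else 0)" if l: "l < k" and j: "j < k" for l j
  proof -
    have f1: "eqv B (lc k (\<lambda>j. if j = l then 1 else 0) z) (lc k' (Q l) z')"
      using Q[OF l] lc_delta[OF l, of z] by simp
    have f2: "eqv B (lc k' (Q l) z') (lc k' (Q l) (\<lambda>i. lc k (P i) z))"
      using P by (intro eqv_lc_cong[OF B]) auto
    have f3: "lc k' (Q l) (\<lambda>i. lc k (P i) z) = lc k (\<lambda>j. \<Sum>i<k'. Q l i * P i j) z" by (rule lc_lc)
    have "eqv B (lc k (\<lambda>j. if j = l then 1 else 0) z) (lc k' (Q l) (\<lambda>i. lc k (P i) z))"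
      by (rule eqv_trans[OF B f1 f2])
    then have "eqv B (lc k (\<lambda>j. if j = l then 1 else 0) z) (lc k (\<lambda>j. \<Sum>i<k'. Q l i * P i j) z)"
      by (simp only: f3)
    from indep_eq[OF B ind1 this j] show ?thesis by (auto split: if_splits)
  qed
  have "(\<Sum>i<k'. a' i i) = (\<Sum>i<k'. \<Sum>j<k. \<Sum>l<k. P i j * a j l * Q l i)"
    by (rule sum.cong) (auto simp: A R_def)
  also have "\<dots> = (\<Sum>j<k. \<Sum>i<k'. \<Sum>l<k. P i j * a j l * Q l i)" by (rule sum.swap)
  also have "\<dots> = (\<Sum>j<k. \<Sum>l<k. \<Sum>i<k'. P i j * a j l * Q l i)"
    by (rule sum.cong[OF refl], rule sum.swap)
  also have "\<dots> = (\<Sum>j<k. \<Sum>l<k. a j l * (\<Sum>i<k'. Q l i * P i j))"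
    by (simp add: sum_distrib_left mult.commute mult.left_commute)
  also have "\<dots> = (\<Sum>j<k. \<Sum>l<k. a j l * (if l = j then 1 else 0))"
    by (intro sum.cong refl) (simp add: QP)
  also have "\<dots> = (\<Sum>j<k. a j j)"
  proof (rule sum.cong[OF refl])
    fix j assume j: "j \<in> {..<k}"
    have "(\<Sum>l<k. a j l * (if l = j then 1 else 0)) = (\<Sum>l<k. if l = j then a j l else 0)"
      by (rule sum.cong) auto
    then show "(\<Sum>l<k. a j l * (if l = j then 1 else 0)) = a j j" using j by simp
  qed
  finally show ?thesis .
qed

lemma quot_trace_is:
  assumes B: "subsp B" and l: "linS g" and gB: "\<forall>b\<in>B. g b \<in> B"
    and V: "valid Z B g k z a"
  shows "quot_trace Z B g = (\<Sum>i<k. a i i)"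
  using quot_trace_eq[OF V] trace_unique[OF B l gB V] by blast


lemma lc_reindex:
  assumes m: "m < k" and n: "n < k"
  defines "\<tau> \<equiv> (\<lambda>i. if i = m then n else if i = n then m else i)"
  shows "lc k c (\<lambda>i. z (\<tau> i)) = lc k (\<lambda>i. c (\<tau> i)) z"
proof
  fix x
  have "(\<Sum>i<k. c i * z (\<tau> i) x) = (\<Sum>i<k. c (\<tau> i) * z i x)"
    by (rule sum.reindex_bij_witness[where i=\<tau> and j=\<tau>]) (use m n in \<open>auto simp: \<tau>_def\<close>)
  then show "lc k c (\<lambda>i. z (\<tau> i)) x = lc k (\<lambda>i. c (\<tau> i)) z x" by (simp add: lc_def)
qed

lemma indep_bound:
  assumes "finite S"
  shows "(\<forall>i<k. \<forall>x. z i x \<noteq> 0 \<longrightarrow> x \<in> S) \<Longrightarrow> (\<forall>c. lc k c z = (\<lambda>_. 0) \<longrightarrow> (\<forall>i<k. c i = 0))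
     \<Longrightarrow> k \<le> card S"
  using assms
proof (induction S arbitrary: k z rule: finite_induct)
  case empty
  show ?case
  proof (rule ccontr)
    assume "\<not> k \<le> card {}"
    then have k: "0 < k" by simp
    have "lc k (\<lambda>_. 1) z = (\<lambda>_. 0)" using empty.prems(1) by (auto simp: lc_def)
    then show False using empty.prems(2) k by force
  qed
next
  case (insert p S)
  show ?case
  proof (cases "\<forall>i<k. z i p = 0")
    case True
    then have "\<forall>i<k. \<forall>x. z i x \<noteq> 0 \<longrightarrow> x \<in> S" using insert.prems(1) by auto
    then have "k \<le> card S" using insert.IH insert.prems(2) by blast
    then show ?thesis using insert.hyps by simp
  next
    case False
    then obtain m where m: "m < k" "z m p \<noteq> 0" by blast
    then obtain n where kn: "k = Suc n" by (cases k) auto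
    define \<tau> where "\<tau> = (\<lambda>i. if i = m then n else if i = n then m else i)"
    define z' where "z' i = z (\<tau> i)" for i
    have nk: "n < k" using kn by simp
    have z'n: "z' n p \<noteq> 0" using m by (simp add: z'_def \<tau>_def)
    have \<tau>k: "\<And>i. i < k \<Longrightarrow> \<tau> i < k" using m nk by (auto simp: \<tau>_def)
    have \<tau>\<tau>: "\<And>i. \<tau> (\<tau> i) = i" by (auto simp: \<tau>_def)
    have ind': "\<forall>i<k. c i = 0" if "lc k c z' = (\<lambda>_. 0)" for c
    proof -
      have "lc k c z' = lc k (\<lambda>i. c (\<tau> i)) z"
        unfolding z'_def \<tau>_def by (rule lc_reindex[OF m(1) nk])
      then have "lc k (\<lambda>i. c (\<tau> i)) z = (\<lambda>_. 0)" using that by simp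
      then have "\<forall>i<k. c (\<tau> i) = 0" using insert.prems(2) by blast
      then show ?thesis using \<tau>k \<tau>\<tau> by metis
    qed
    have supp': "\<forall>i<k. \<forall>x. z' i x \<noteq> 0 \<longrightarrow> x \<in> insert p S"
      using insert.prems(1) \<tau>k unfolding z'_def by blast
    define y where "y i = (\<lambda>x. z' i x - (z' i p / z' n p) * z' n x)" for i
    have suppy: "\<forall>i<n. \<forall>x. y i x \<noteq> 0 \<longrightarrow> x \<in> S"
    proof (intro allI impI)
      fix i x assume i: "i < n" and nz: "y i x \<noteq> 0"
      have "x \<noteq> p" using nz z'n by (auto simp: y_def)
      moreover have "z' i x \<noteq> 0 \<or> z' n x \<noteq> 0" using nz by (auto simp: y_def)
      moreover have "i < k" "n < k" using i kn by auto
      ultimately show "x \<in> S" using supp' by blast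
    qed
    have indy: "\<forall>i<n. c i = 0" if c: "lc n c y = (\<lambda>_. 0)" for c
    proof -
      define C where "C i = (if i < n then c i else - (\<Sum>j<n. c j * z' j p) / z' n p)" for i
      have "lc k C z' = lc n c y"
      proof
        fix x
        have "lc n c y x = (\<Sum>i<n. c i * z' i x) - (\<Sum>j<n. c j * z' j p) / z' n p * z' n x"
          by (simp add: lc_def y_def right_diff_distrib sum_subtractf sum_divide_distrib
              sum_distrib_right mult.assoc)
        moreover have "lc k C z' x = (\<Sum>i<n. c i * z' i x) + C n * z' n x"
          by (simp add: lc_def kn C_def)
        ultimately show "lc k C z' x = lc n c y x" by (simp add: C_def)
      qed
      then have "\<forall>i<k. C i = 0" using ind' c by simp
      then show ?thesis using kn unfolding C_def by (metis less_SucI)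
    qed
    have "n \<le> card S" using insert.IH[OF suppy] indy by blast
    then show ?thesis using insert.hyps kn by simp
  qed
qed

lemma valid_exists:
  assumes B: "subsp B" and Z: "subsp Z" and BZ: "B \<subseteq> Z" and S: "finite S"
    and supp: "\<forall>u\<in>Z. \<forall>x. u x \<noteq> 0 \<longrightarrow> x \<in> S" and gZ: "\<forall>u\<in>Z. g u \<in> Z"
  shows "\<exists>k z a. valid Z B g k z a"
proof -
  define K where "K = {k. \<exists>z. (\<forall>i<k. z i \<in> Z) \<and> (\<forall>c. lc k c z \<in> B \<longrightarrow> (\<forall>i<k. c i = 0))}"
  have Kb: "K \<subseteq> {..card S}"
  proof
    fix k assume "k \<in> K"
    then obtain z where z: "\<forall>i<k. z i \<in> Z" "\<forall>c. lc k c z \<in> B \<longrightarrow> (\<forall>i<k. c i = 0)"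
      unfolding K_def by blast
    have "k \<le> card S"
    proof (rule indep_bound[OF S])
      show "\<forall>i<k. \<forall>x. z i x \<noteq> 0 \<longrightarrow> x \<in> S" using z(1) supp by blast
      show "\<forall>c. lc k c z = (\<lambda>_. 0) \<longrightarrow> (\<forall>i<k. c i = 0)" using z(2) subsp_0[OF B] by auto
    qed
    then show "k \<in> {..card S}" by simp
  qed
  have K0: "0 \<in> K" unfolding K_def by simp
  have fK: "finite K" using Kb finite_subset by blast
  define k where "k = Max K"
  have "k \<in> K" using fK K0 unfolding k_def by (intro Max_in) auto
  then obtain z where zZ: "\<forall>i<k. z i \<in> Z" and ind: "\<forall>c. lc k c z \<in> B \<longrightarrow> (\<forall>i<k. c i = 0)"
    unfolding K_def by blast
  have sp: "\<forall>w\<in>Z. \<exists>c. eqv B w (lc k c z)"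
  proof (rule ccontr)
    assume "\<not> ?thesis"
    then obtain w where w: "w \<in> Z" and nw: "\<And>c. \<not> eqv B w (lc k c z)" by blast
    define z' where "z' = z(k := w)"
    have "Suc k \<in> K" unfolding K_def
    proof (intro CollectI exI[of _ z'] conjI allI impI)
      fix i assume "i < Suc k" then show "z' i \<in> Z" using zZ w by (auto simp: z'_def less_Suc_eq)
    next
      fix c i assume c: "lc (Suc k) c z' \<in> B" and i: "i < Suc k"
      have e: "lc (Suc k) c z' = (\<lambda>x. lc k c z x + c k * w x)"
        by (simp add: lc_def z'_def)
      have ck: "c k = 0"
      proof (rule ccontr)
        assume ck: "c k \<noteq> 0"
        have "(\<lambda>x. (1 / c k) * lc (Suc k) c z' x) \<in> B" using subsp_smult[OF B c] .
        moreover have "(\<lambda>x. (1 / c k) * lc (Suc k) c z' x) = (\<lambda>x. w x - lc k (\<lambda>i. - c i / c k) z x)"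
        proof
          fix x
          have "(1 / c k) * lc (Suc k) c z' x = (1 / c k) * (lc k c z x + c k * w x)" by (simp add: e)
          also have "\<dots> = w x + lc k c z x / c k" using ck by (simp add: field_simps)
          also have "lc k c z x / c k = - lc k (\<lambda>i. - c i / c k) z x"
            by (simp add: lc_def sum_divide_distrib sum_negf)
          finally show "(1 / c k) * lc (Suc k) c z' x = w x - lc k (\<lambda>i. - c i / c k) z x" by simp
        qed
        ultimately have "eqv B w (lc k (\<lambda>i. - c i / c k) z)" by (simp add: eqv_def)
        then show False using nw by blast
      qed
      have "lc k c z \<in> B" using c e ck by simp
      then show "c i = 0" using ind i ck by (auto simp: less_Suc_eq)
    qed
    then have "Suc k \<le> k" using fK unfolding k_def by simp
    then show False by simp
  qed
  have "\<forall>i. \<exists>c. i < k \<longrightarrow> eqv B (g (z i)) (lc k c z)" using sp zZ gZ by blast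
  from choice[OF this] obtain a where a: "\<forall>i. i < k \<longrightarrow> eqv B (g (z i)) (lc k (a i) z)" by blast
  have "valid Z B g k z a" unfolding valid_def using zZ ind sp a by blast
  then show ?thesis by blast
qed


lemma sum_lessThan_add: "(\<Sum>i<(k1::nat) + k2. f i) = (\<Sum>i<k1. f i) + (\<Sum>j<k2. f (k1 + j))"
  by (induction k2) (simp_all add: add.assoc)

lemma linS_add: "linS g \<Longrightarrow> g (\<lambda>x. u x + v x) = (\<lambda>x. g u x + g v x)"
proof -
  assume l: "linS g"
  define U where "U i = (if i = (0::nat) then u else v)" for i
  have "g (\<lambda>x. \<Sum>i\<in>{0::nat, 1}. (\<lambda>_. 1::rat) i * U i x) = (\<lambda>x. \<Sum>i\<in>{0::nat, 1}. (\<lambda>_. 1::rat) i * g (U i) x)"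
    by (rule linS_sum[OF l]) simp
  then show ?thesis by (simp add: U_def)
qed

lemma linS_smult: "linS g \<Longrightarrow> g (\<lambda>x. c * u x) = (\<lambda>x. c * g u x)"
proof -
  assume l: "linS g"
  have "g (\<lambda>x. \<Sum>i\<in>{0::nat}. (\<lambda>_. c) i * (\<lambda>_. u) i x) = (\<lambda>x. \<Sum>i\<in>{0::nat}. (\<lambda>_. c) i * g ((\<lambda>_. u) i) x)"
    by (rule linS_sum[OF l]) simp
  then show ?thesis by simp
qed

lemma lc_zero_coeffs: "(\<And>i. i < k \<Longrightarrow> c i = 0) \<Longrightarrow> lc k c z = (\<lambda>_. 0)"
  by (simp add: lc_def)

lemma trace_self:
  assumes W: "subsp W" and l: "linS g" and gW: "\<forall>b\<in>W. g b \<in> W"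
  shows "quot_trace W W g = 0"
proof -
  have "valid W W g 0 (\<lambda>_ _. 0) (\<lambda>_ _. 0)"
    unfolding valid_def eqv_def lc_def by simp
  from quot_trace_is[OF W l gW this] show ?thesis by simp
qed

lemma trace_add:
  assumes B: "subsp B" and Y: "subsp Y" and Z: "subsp Z" and BY: "B \<subseteq> Y" and YZ: "Y \<subseteq> Z"
    and S: "finite S" and supp: "\<forall>u\<in>Z. \<forall>x. u x \<noteq> 0 \<longrightarrow> x \<in> S" and l: "linS g"
    and gB: "\<forall>b\<in>B. g b \<in> B" and gY: "\<forall>b\<in>Y. g b \<in> Y" and gZ: "\<forall>b\<in>Z. g b \<in> Z"
  shows "quot_trace Z B g = quot_trace Z Y g + quot_trace Y B g"
proof -
  have suppY: "\<forall>u\<in>Y. \<forall>x. u x \<noteq> 0 \<longrightarrow> x \<in> S" using supp YZ by blast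
  obtain k1 y a1 where V1: "valid Y B g k1 y a1" using valid_exists[OF B Y BY S suppY gY] by blast
  obtain k2 w a2 where V2: "valid Z Y g k2 w a2" using valid_exists[OF Y Z YZ S supp gZ] by blast
  have yY: "\<forall>i<k1. y i \<in> Y" and ind1: "\<forall>c. lc k1 c y \<in> B \<longrightarrow> (\<forall>i<k1. c i = 0)"
    and sp1: "\<forall>u\<in>Y. \<exists>c. eqv B u (lc k1 c y)" and m1: "\<forall>i<k1. eqv B (g (y i)) (lc k1 (a1 i) y)"
    using V1 unfolding valid_def by blast+
  have wZ: "\<forall>i<k2. w i \<in> Z" and ind2: "\<forall>c. lc k2 c w \<in> Y \<longrightarrow> (\<forall>i<k2. c i = 0)"
    and sp2: "\<forall>u\<in>Z. \<exists>c. eqv Y u (lc k2 c w)" and m2: "\<forall>i<k2. eqv Y (g (w i)) (lc k2 (a2 i) w)"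
    using V2 unfolding valid_def by blast+
  have "\<forall>i. \<exists>e. i < k2 \<longrightarrow> eqv B (\<lambda>x. g (w i) x - lc k2 (a2 i) w x) (lc k1 e y)"
  proof
    fix i
    show "\<exists>e. i < k2 \<longrightarrow> eqv B (\<lambda>x. g (w i) x - lc k2 (a2 i) w x) (lc k1 e y)"
    proof (cases "i < k2")
      case True
      then have "(\<lambda>x. g (w i) x - lc k2 (a2 i) w x) \<in> Y" using m2 by (simp add: eqv_def)
      from sp1[rule_format, OF this] show ?thesis by blast
    qed simp
  qed
  from choice[OF this] obtain E where
    E: "\<forall>i. i < k2 \<longrightarrow> eqv B (\<lambda>x. g (w i) x - lc k2 (a2 i) w x) (lc k1 (E i) y)" by blast
  define z where "z i = (if i < k1 then y i else w (i - k1))" for i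
  define a where "a i j = (if i < k1 then (if j < k1 then a1 i j else 0)
      else (if j < k1 then E (i - k1) j else a2 (i - k1) (j - k1)))" for i j
  have split: "lc (k1 + k2) c z = (\<lambda>x. lc k1 c y x + lc k2 (\<lambda>j. c (k1 + j)) w x)" for c
    by (simp add: lc_def sum_lessThan_add z_def)
  have V: "valid Z B g (k1 + k2) z a"
    unfolding valid_def
  proof (intro conjI allI impI ballI)
    fix i assume "i < k1 + k2"
    then show "z i \<in> Z" using yY wZ YZ by (auto simp: z_def)
  next
    fix c i assume c: "lc (k1 + k2) c z \<in> B" and i: "i < k1 + k2"
    have ly: "lc k1 c y \<in> Y" using yY by (intro subsp_lc[OF Y]) auto
    have "(\<lambda>x. lc (k1 + k2) c z x - lc k1 c y x) \<in> Y" using subsp_diff[OF Y _ ly] c BY by blast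
    then have "lc k2 (\<lambda>j. c (k1 + j)) w \<in> Y" by (simp add: split)
    then have c2: "\<forall>j<k2. c (k1 + j) = 0" using ind2 by blast
    then have "lc k2 (\<lambda>j. c (k1 + j)) w = (\<lambda>_. 0)" by (intro lc_zero_coeffs) simp
    then have "lc k1 c y \<in> B" using c by (simp add: split)
    then have c1: "\<forall>j<k1. c j = 0" using ind1 by blast
    show "c i = 0"
    proof (cases "i < k1")
      case True then show ?thesis using c1 by simp
    next
      case False then show ?thesis using c2[rule_format, of "i - k1"] i by simp
    qed
  next
    fix u assume u: "u \<in> Z"
    obtain d where d: "eqv Y u (lc k2 d w)" using sp2 u by blast
    have "(\<lambda>x. u x - lc k2 d w x) \<in> Y" using d by (simp add: eqv_def)
    from sp1[rule_format, OF this] obtain e where e: "eqv B (\<lambda>x. u x - lc k2 d w x) (lc k1 e y)" by blast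
    define c where "c i = (if i < k1 then e i else d (i - k1))" for i
    have "lc (k1 + k2) c z = (\<lambda>x. lc k1 e y x + lc k2 d w x)"
      unfolding split by (simp add: c_def lc_def)
    then have "eqv B u (lc (k1 + k2) c z)" using e by (simp add: eqv_def algebra_simps)
    then show "\<exists>c. eqv B u (lc (k1 + k2) c z)" by blast
  next
    fix i assume i: "i < k1 + k2"
    show "eqv B (g (z i)) (lc (k1 + k2) (a i) z)"
    proof (cases "i < k1")
      case True
      have "lc (k1 + k2) (a i) z = lc k1 (a1 i) y"
        unfolding split using True by (simp add: a_def lc_def)
      then show ?thesis using m1 True by (simp add: z_def)
    next
      case False
      define i' where "i' = i - k1"
      have i': "i' < k2" "i = k1 + i'" using i False by (auto simp: i'_def)
      have "lc (k1 + k2) (a i) z = (\<lambda>x. lc k1 (E i') y x + lc k2 (a2 i') w x)"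
        unfolding split using False by (simp add: a_def lc_def i'_def)
      moreover have "eqv B (\<lambda>x. g (w i') x - lc k2 (a2 i') w x) (lc k1 (E i') y)"
        using E i' by blast
      ultimately show ?thesis using False by (simp add: z_def i'_def eqv_def algebra_simps)
    qed
  qed
  have "(\<Sum>i<k1 + k2. a i i) = (\<Sum>i<k1. a1 i i) + (\<Sum>j<k2. a2 j j)"
    by (simp add: sum_lessThan_add a_def)
  moreover have "quot_trace Z B g = (\<Sum>i<k1 + k2. a i i)" by (rule quot_trace_is[OF B l gB V])
  moreover have "quot_trace Z Y g = (\<Sum>j<k2. a2 j j)" by (rule quot_trace_is[OF Y l gY V2])
  moreover have "quot_trace Y B g = (\<Sum>i<k1. a1 i i)" by (rule quot_trace_is[OF B l gB V1])
  ultimately show ?thesis by simp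
qed

lemma trace_iso:
  assumes C: "subsp C" and Zc: "Zc = {c \<in> C. d c = (\<lambda>_. 0)}"
    and ld: "linS d" and lg: "linS g" and lh: "linS h"
    and gC: "\<forall>u\<in>C. g u \<in> C" and comm: "\<forall>u\<in>C. d (g u) = h (d u)"
    and S: "finite S" and supp: "\<forall>u\<in>C. \<forall>x. u x \<noteq> 0 \<longrightarrow> x \<in> S"
  shows "quot_trace C Zc g = quot_trace (d ` C) {\<lambda>_. 0} h"
proof -
  have Zs: "subsp Zc" unfolding subsp_def Zc
    using subsp_0[OF C] subsp_add[OF C] subsp_smult[OF C] linS_0[OF ld] linS_add[OF ld] linS_smult[OF ld]
    by auto
  have ZC: "Zc \<subseteq> C" using Zc by auto
  have gZ: "\<forall>b\<in>Zc. g b \<in> Zc" using Zc gC comm linS_0[OF lh] by auto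
  obtain k w a where V: "valid C Zc g k w a" using valid_exists[OF Zs C ZC S supp gC] by blast
  have wC: "\<forall>i<k. w i \<in> C" and ind: "\<forall>c. lc k c w \<in> Zc \<longrightarrow> (\<forall>i<k. c i = 0)"
    and sp: "\<forall>u\<in>C. \<exists>c. eqv Zc u (lc k c w)" and m: "\<forall>i<k. eqv Zc (g (w i)) (lc k (a i) w)"
    using V unfolding valid_def by blast+
  have dlc: "d (lc k c w) = lc k c (\<lambda>i. d (w i))" for c using linS_lc[OF ld] .
  have O: "subsp {(\<lambda>_. 0) :: 'c \<Rightarrow> rat}" by (simp add: subsp_def)
  have V': "valid (d ` C) {\<lambda>_. 0} h k (\<lambda>i. d (w i)) a"
    unfolding valid_def
  proof (intro conjI allI impI ballI)
    fix i assume "i < k" then show "d (w i) \<in> d ` C" using wC by blast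
  next
    fix c i assume c: "lc k c (\<lambda>i. d (w i)) \<in> {\<lambda>_. 0}" and i: "i < k"
    have "lc k c w \<in> Zc" using c dlc subsp_lc[OF C, of k w c] wC Zc by auto
    then show "c i = 0" using ind i by blast
  next
    fix b assume "b \<in> d ` C"
    then obtain u where u: "u \<in> C" "b = d u" by blast
    obtain c where "eqv Zc u (lc k c w)" using sp u by blast
    then have "d (\<lambda>x. u x - lc k c w x) = (\<lambda>_. 0)" using Zc by (simp add: eqv_def)
    then have "(\<lambda>x. b x - lc k c (\<lambda>i. d (w i)) x) = (\<lambda>_. 0)"
      using u by (simp add: linS_diff[OF ld] dlc)
    then show "\<exists>c. eqv {\<lambda>_. 0} b (lc k c (\<lambda>i. d (w i)))" by (auto simp: eqv_def)
  next
    fix i assume i: "i < k"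
    have "d (\<lambda>x. g (w i) x - lc k (a i) w x) = (\<lambda>_. 0)" using m i Zc by (simp add: eqv_def)
    then have "(\<lambda>x. d (g (w i)) x - lc k (a i) (\<lambda>i. d (w i)) x) = (\<lambda>_. 0)"
      by (simp add: linS_diff[OF ld] dlc)
    then show "eqv {\<lambda>_. 0} (h (d (w i))) (lc k (a i) (\<lambda>i. d (w i)))"
      using comm wC i by (simp add: eqv_def)
  qed
  have hO: "\<forall>b\<in>{\<lambda>_. 0}. h b \<in> {\<lambda>_. 0}" using linS_0[OF lh] by simp
  show ?thesis using quot_trace_is[OF Zs lg gZ V] quot_trace_is[OF O lh hO V'] by simp
qed


lemma subsp_chains: "subsp (chains X adj q)"
  unfolding subsp_def
proof (intro conjI ballI allI)
  show "(\<lambda>_. 0) \<in> chains X adj q" by (simp add: chains_def)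
next
  fix u v assume u: "u \<in> chains X adj q" and v: "v \<in> chains X adj q"
  show "(\<lambda>x. u x + v x) \<in> chains X adj q" unfolding chains_def
  proof (intro CollectI allI impI)
    fix s assume "u s + v s \<noteq> 0"
    then have "u s \<noteq> 0 \<or> v s \<noteq> 0" by auto
    then show "s \<in> simplices X adj q" using u v unfolding chains_def by blast
  qed
next
  fix c u assume u: "u \<in> chains X adj q"
  show "(\<lambda>x. c * u x) \<in> chains X adj q" using u unfolding chains_def by auto
qed

lemma linS_bdry: "linS (bdry X adj q)"
  unfolding linS_def using bdry_lin by blast

lemma linS_chain_map: "linS (chain_map X adj f q)"
  unfolding linS_def using chain_map_lin by blast

lemma subsp_kernel: "subsp C \<Longrightarrow> linS d \<Longrightarrow> subsp {c \<in> C. d c = (\<lambda>_. 0)}"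
  unfolding subsp_def
  using linS_0[of d] linS_add[of d] linS_smult[of d] by auto

lemma subsp_image: "subsp C \<Longrightarrow> linS d \<Longrightarrow> subsp (d ` C)"
proof -
  assume C: "subsp C" and d: "linS d"
  show ?thesis unfolding subsp_def
  proof (intro conjI ballI allI)
    show "(\<lambda>_. 0) \<in> d ` C" using subsp_0[OF C] linS_0[OF d] by (metis imageI)
  next
    fix u v assume "u \<in> d ` C" "v \<in> d ` C"
    then obtain u' v' where "u' \<in> C" "v' \<in> C" "u = d u'" "v = d v'" by blast
    then show "(\<lambda>x. u x + v x) \<in> d ` C"
      using subsp_add[OF C] linS_add[OF d, of u' v'] by (metis imageI)
  next
    fix c u assume "u \<in> d ` C"
    then obtain u' where "u' \<in> C" "u = d u'" by blast
    then show "(\<lambda>x. c * u x) \<in> d ` C"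
      using subsp_smult[OF C] linS_smult[OF d, of c u'] by (metis imageI)
  qed
qed

lemma no_approx_image:
  assumes di: "digital_image X adj" and s: "s \<in> simplices X adj q" and eq: "f ` s = s"
  shows "\<exists>x\<in>X. approx_fixed_point adj f x"
proof -
  have fs: "finite s" "card s = Suc q" "s \<subseteq> X" using simplicesD[OF s] by auto
  then obtain x where x: "x \<in> s" by (metis card.empty ex_in_conv nat.distinct(1))
  have fx: "f x \<in> s" using x eq by blast
  have pw: "\<forall>a\<in>s. \<forall>b\<in>s. a \<noteq> b \<longrightarrow> adj a b" using s by (simp add: simplices_def)
  have "f x = x \<or> adj x (f x)"
  proof (cases "f x = x")
    case False
    then have "adj x (f x)" using pw x fx by metis
    then show ?thesis by simp
  qed simp
  then have "approx_fixed_point adj f x"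
    using di by (auto simp: approx_fixed_point_def adj_eq_def digital_image_def)
  then show ?thesis using x fs by blast
qed

lemma chain_trace_zero:
  assumes fX: "finite X" and di: "digital_image X adj" and c: "digitally_continuous X adj f"
    and nafp: "\<not> (\<exists>x\<in>X. approx_fixed_point adj f x)"
  shows "quot_trace (chains X adj q) {\<lambda>_. 0} (chain_map X adj f q) = 0"
proof -
  let ?S = "simplices X adj q"
  let ?g = "chain_map X adj f q"
  have fS: "finite ?S" using finite_simplices[OF fX] .
  obtain e where e: "bij_betw e {0..<card ?S} ?S" using ex_bij_betw_nat_finite[OF fS] by blast
  define k where "k = card ?S"
  have e': "bij_betw e {..<k} ?S" using e by (simp add: k_def atLeast0LessThan)
  define z where "z i = (\<lambda>t. if t = e i then (1::rat) else 0)" for i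
  define a where "a i j = ?g (z i) (e j)" for i j
  have expand: "lc k (\<lambda>i. w (e i)) z = w" if w: "w \<in> chains X adj q" for w
  proof
    fix t
    have "lc k (\<lambda>i. w (e i)) z t = (\<Sum>i<k. (\<lambda>s. w s * (if t = s then 1 else 0)) (e i))"
      by (simp add: lc_def z_def)
    also have "\<dots> = (\<Sum>s\<in>?S. w s * (if t = s then 1 else 0))"
      by (rule sum.reindex_bij_betw[OF e'])
    also have "\<dots> = (\<Sum>s\<in>?S. if s = t then w t else 0)" by (rule sum.cong) auto
    also have "\<dots> = w t" using fS w by (auto simp: chains_def)
    finally show "lc k (\<lambda>i. w (e i)) z t = w t" .
  qed
  have O: "subsp {(\<lambda>_. 0) :: 'a set \<Rightarrow> rat}" by (simp add: subsp_def)
  have gO: "\<forall>b\<in>{\<lambda>_. 0}. ?g b \<in> {\<lambda>_. 0}" using linS_0[OF linS_chain_map] by simp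
  have inj: "inj_on e {..<k}" using e' by (simp add: bij_betw_def)
  have eS: "\<And>i. i < k \<Longrightarrow> e i \<in> ?S" using e' by (auto simp: bij_betw_def)
  have V: "valid (chains X adj q) {\<lambda>_. 0} ?g k z a"
    unfolding valid_def
  proof (intro conjI allI impI ballI)
    fix i assume "i < k" then show "z i \<in> chains X adj q" using eS by (auto simp: chains_def z_def)
  next
    fix c i assume c: "lc k c z \<in> {\<lambda>_. 0}" and i: "i < k"
    have "lc k c z (e i) = (\<Sum>j<k. if j = i then c j else 0)"
      unfolding lc_def z_def using inj i by (intro sum.cong) (auto simp: inj_on_def)
    then have "lc k c z (e i) = c i" using i by simp
    then show "c i = 0" using c by simp
  next
    fix w assume "w \<in> chains X adj q"
    then have "eqv {\<lambda>_. 0} w (lc k (\<lambda>i. w (e i)) z)" using expand by (simp add: eqv_def)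
    then show "\<exists>c. eqv {\<lambda>_. 0} w (lc k c z)" by blast
  next
    fix i assume "i < k"
    have "?g (z i) \<in> chains X adj q" by (rule chain_map_chains[OF c])
    moreover have "a i = (\<lambda>j. ?g (z i) (e j))" by (simp add: a_def fun_eq_iff)
    ultimately show "eqv {\<lambda>_. 0} (?g (z i)) (lc k (a i) z)"
      using expand[of "?g (z i)"] by (simp add: eqv_def)
  qed
  have diag: "a i i = 0" if i: "i < k" for i
  proof -
    have "f ` e i \<noteq> e i" using no_approx_image[OF di eS[OF i]] nafp by blast
    then show ?thesis unfolding a_def chain_map_def z_def
      by (intro sum.neutral) auto
  qed
  show ?thesis using quot_trace_is[OF O linS_chain_map gO V] diag by simp
qed


lemma lefschetz_zero:
  assumes fX: "finite X" and di: "digital_image X adj" and c: "digitally_continuous X adj f"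
    and nafp: "\<not> (\<exists>x\<in>X. approx_fixed_point adj f x)"
  shows "lefschetz X adj f = 0"
proof -
  define Oz where "Oz = {(\<lambda>_. 0) :: 'a set \<Rightarrow> rat}"
  define H where "H q = quot_trace (cycles X adj q) (boundaries X adj q) (chain_map X adj f q)" for q
  define \<beta> where "\<beta> q = quot_trace (boundaries X adj q) Oz (chain_map X adj f q)" for q
  have sO: "subsp Oz" by (simp add: subsp_def Oz_def)
  have cyc: "cycles X adj q = {u \<in> chains X adj q. bdry X adj q u = (\<lambda>_. 0)}" for q
    by (simp add: cycles_def)
  have sC: "subsp (chains X adj q)" for q by (rule subsp_chains)
  have sZ: "subsp (cycles X adj q)" for q unfolding cyc by (rule subsp_kernel[OF sC linS_bdry])
  have sB: "subsp (boundaries X adj q)" for q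
    unfolding boundaries_def by (rule subsp_image[OF sC linS_bdry])
  have OB: "Oz \<subseteq> boundaries X adj q" for q
  proof -
    have "(\<lambda>_. 0) = bdry X adj (Suc q) (\<lambda>_. 0)" using linS_0[OF linS_bdry, of X adj "Suc q"] by simp
    then show ?thesis unfolding Oz_def boundaries_def using subsp_0[OF sC] by blast
  qed
  have BZ: "boundaries X adj q \<subseteq> cycles X adj q" for q
    unfolding boundaries_def cyc using bdry_chains bdry_bdry[OF fX] by blast
  have ZC: "cycles X adj q \<subseteq> chains X adj q" for q unfolding cyc by blast
  have fS: "finite (simplices X adj q)" for q using finite_simplices[OF fX] .
  have suppC: "\<forall>u\<in>chains X adj q. \<forall>x. u x \<noteq> 0 \<longrightarrow> x \<in> simplices X adj q" for q
    by (simp add: chains_def)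
  have suppZ: "\<forall>u\<in>cycles X adj q. \<forall>x. u x \<noteq> 0 \<longrightarrow> x \<in> simplices X adj q" for q
    using suppC ZC by blast
  have lg: "linS (chain_map X adj f q)" for q by (rule linS_chain_map)
  have gO: "\<forall>b\<in>Oz. chain_map X adj f q b \<in> Oz" for q using linS_0[OF lg] by (simp add: Oz_def)
  have gC: "\<forall>u\<in>chains X adj q. chain_map X adj f q u \<in> chains X adj q" for q
    using chain_map_chains[OF c] by blast
  have gZ: "\<forall>u\<in>cycles X adj q. chain_map X adj f q u \<in> cycles X adj q" for q
  proof
    fix u assume u: "u \<in> cycles X adj q"
    have "bdry X adj q (chain_map X adj f q u) = (\<lambda>_. 0)"
    proof (cases q)
      case 0 then show ?thesis by (simp add: bdry_def)
    next
      case (Suc p)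
      have "bdry X adj q (chain_map X adj f q u) = chain_map X adj f p (bdry X adj (Suc p) u)"
        unfolding Suc by (rule bdry_chain_map[OF fX c])
      also have "bdry X adj (Suc p) u = (\<lambda>_. 0)" using u Suc by (simp add: cyc)
      finally show ?thesis using linS_0[OF lg] by simp
    qed
    then show "chain_map X adj f q u \<in> cycles X adj q" using u gC unfolding cyc by blast
  qed
  have gB: "\<forall>u\<in>boundaries X adj q. chain_map X adj f q u \<in> boundaries X adj q" for q
  proof
    fix b assume "b \<in> boundaries X adj q"
    then obtain u where u: "u \<in> chains X adj (Suc q)" "b = bdry X adj (Suc q) u"
      unfolding boundaries_def by blast
    have "chain_map X adj f q b = bdry X adj (Suc q) (chain_map X adj f (Suc q) u)"
      using u bdry_chain_map[OF fX c] by simp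
    then show "chain_map X adj f q b \<in> boundaries X adj q"
      unfolding boundaries_def using gC u by blast
  qed
  have OZ: "Oz \<subseteq> cycles X adj q" for q using OB BZ by blast
  have rel: "0 = (case q of 0 \<Rightarrow> 0 | Suc p \<Rightarrow> \<beta> p) + H q + \<beta> q" for q
  proof -
    have T: "quot_trace (chains X adj q) Oz (chain_map X adj f q) = 0"
      unfolding Oz_def by (rule chain_trace_zero[OF fX di c nafp])
    have add1: "quot_trace (chains X adj q) Oz (chain_map X adj f q) =
        quot_trace (chains X adj q) (cycles X adj q) (chain_map X adj f q) +
        quot_trace (cycles X adj q) Oz (chain_map X adj f q)"
      by (rule trace_add[OF sO sZ sC OZ ZC fS suppC lg gO gZ gC])
    have add2: "quot_trace (cycles X adj q) Oz (chain_map X adj f q) = H q + \<beta> q"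
      unfolding H_def \<beta>_def by (rule trace_add[OF sO sB sZ OB BZ fS suppZ lg gO gB gZ])
    have first: "quot_trace (chains X adj q) (cycles X adj q) (chain_map X adj f q) =
        (case q of 0 \<Rightarrow> 0 | Suc p \<Rightarrow> \<beta> p)"
    proof (cases q)
      case 0
      have "cycles X adj q = chains X adj q" using 0 by (auto simp: cyc bdry_def)
      then show ?thesis using trace_self[OF sC lg gC] 0 by simp
    next
      case (Suc p)
      have comm: "\<forall>u\<in>chains X adj (Suc p). bdry X adj (Suc p) (chain_map X adj f (Suc p) u) =
          chain_map X adj f p (bdry X adj (Suc p) u)"
        using bdry_chain_map[OF fX c] by blast
      have "quot_trace (chains X adj (Suc p)) (cycles X adj (Suc p)) (chain_map X adj f (Suc p)) =
          quot_trace (bdry X adj (Suc p) ` chains X adj (Suc p)) {\<lambda>_. 0} (chain_map X adj f p)"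
        by (rule trace_iso[OF sC cyc linS_bdry lg lg gC comm fS suppC])
      then show ?thesis using Suc by (simp add: \<beta>_def boundaries_def Oz_def)
    qed
    show ?thesis using T add1 add2 first by simp
  qed
  have tele: "(\<Sum>q\<le>n. (-1) ^ q * H q) = - ((-1) ^ n * \<beta> n)" for n
  proof (induction n)
    case 0
    then show ?case using rel[of 0] by simp
  next
    case (Suc n)
    have e: "H (Suc n) = - \<beta> n - \<beta> (Suc n)" using rel[of "Suc n"] by simp
    have "(\<Sum>q\<le>Suc n. (-1) ^ q * H q) = (\<Sum>q\<le>n. (-1) ^ q * H q) + (-1) ^ (Suc n) * H (Suc n)"
      by simp
    also have "\<dots> = - ((-1) ^ n * \<beta> n) + (-1) ^ (Suc n) * (- \<beta> n - \<beta> (Suc n))"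
      using Suc.IH e by simp
    also have "\<dots> = - ((-1) ^ (Suc n) * \<beta> (Suc n))" by (simp add: algebra_simps)
    finally show ?case .
  qed
  have "simplices X adj (Suc (card X)) = {}"
  proof (rule ccontr)
    assume "simplices X adj (Suc (card X)) \<noteq> {}"
    then obtain s where s: "s \<in> simplices X adj (Suc (card X))" by blast
    then have "card s \<le> card X" using simplicesD[OF s] fX card_mono by blast
    then show False using simplicesD[OF s] by simp
  qed
  then have "boundaries X adj (card X) = Oz"
    using subsp_0[OF sC] unfolding boundaries_def Oz_def by (auto simp: bdry_def)
  then have "\<beta> (card X) = 0" using trace_self[OF sO lg gO] by (simp add: \<beta>_def)
  then show ?thesis unfolding lefschetz_def using tele[of "card X"] by (simp add: H_def)
qed

theorem corollary3p4:
  fixes X :: "'a::linorder set" and adj :: "'a \<Rightarrow> 'a \<Rightarrow> bool" and f :: "'a \<Rightarrow> 'a"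
  assumes "finite X" and "digital_image X adj" and "digitally_continuous X adj f"
    and "lefschetz X adj f \<noteq> 0"
  shows "(\<exists>x\<in>X. f x = x) \<or>
         (\<exists>x\<in>X. \<exists>y\<in>X. x \<noteq> y \<and> approx_fixed_point adj f x \<and> approx_fixed_point adj f y)"
proof (rule ccontr)
  assume neg: "\<not> ?thesis"
  have "\<not> (\<exists>x\<in>X. approx_fixed_point adj f x)"
  proof
    assume "\<exists>x\<in>X. approx_fixed_point adj f x"
    then obtain x where x: "x \<in> X" "approx_fixed_point adj f x" by blast
    have nf: "f x \<noteq> x" using neg x by blast
    then have a1: "adj (f x) x" using x by (simp add: approx_fixed_point_def adj_eq_def)
    have sym: "\<And>u v. adj u v \<Longrightarrow> adj v u" using assms(2) by (simp add: digital_image_def)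
    have yX: "f x \<in> X" using assms(3) x by (auto simp: digitally_continuous_def)
    have "adj_eq adj (f x) (f (f x))"
      using assms(3) x yX sym[OF a1] by (simp add: digitally_continuous_def)
    then have "approx_fixed_point adj f (f x)"
      using sym by (auto simp: approx_fixed_point_def adj_eq_def)
    then show False using neg x yX nf by blast
  qed
  then have "lefschetz X adj f = 0" using lefschetz_zero assms(1-3) by blast
  then show False using assms(4) by simp
qed


end
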